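(* For every horizon $H$ there exist a class $\mathcal{M}$ of MDPs with shared finite layered state space $\mathcal{X}$, action space $\mathcal{A}=\{a_1,a_2\}$ and horizon $H$, a deterministic evaluation policy $\pi_e$, and an offline policy $\pi_b$, such that for every $M\in\mathcal{M}$ the pushforward concentrability coefficient of $M$ with respect to $\mu_h=d_h^{\pi_b}(\cdot;M)$ satisfies $\mathsf{C}_{\mathrm{pf}}\le4$, and such that any algorithm (given no value function class) that estimates $V^{\pi_e}(\rho;M)$ up to precision $1/2$ for all $M\in\mathcal{M}$ must use $\Omega(2^H)$ offline trajectories (sampled in $M$ with $\pi_b$) in some $M\in\mathcal{M}$; specifically, with $o(2^H)$ trajectories it fails to be $1/2$-accurate with probability at least $1/4$ on some $M\in\mathcal{M}$.
   Context: Layered finite-horizon MDP $M=(\mathcal{X},\mathcal{A},T,r,H,\rho)$ with rewards in $[-1,1]$; $d_h^\pi(x,a;M)$ is the occupancy of $\pi$ at layer $h$; $V^\pi(\rho;M)=\mathbb{E}_{x_1\sim\rho}V_1^\pi(x_1)$. A trajectory is $(x_1,a_1,r_1,\dots,x_H)$ with $x_1\sim\rho$, $a_h\sim\pi_b(\cdot|x_h)$, $r_h\sim r(x_h,a_h)$, $x_{h+1}\sim T(\cdot|x_h,a_h)$. Pushforward concentrability w.r.t. $\mu$ (with $\mu(x)=\sum_a\mu_h(x,a)$, $\mu(a|x)=\mu_h(x,a)/\mu(x)$ for $x\in\mathcal{X}_h$): if $\mu(a|x)\ge1/\mathsf{C}_{\mathcal{A}}$ for all $x,a$, and $T(x'|x,a)/\mu(x')<\mathsf{C}_{\mathcal{X}}$,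 $\rho(x)/\mu(x)<\mathsf{C}_{\mathcal{X}}$ for all $x,x',a$, then $\mathsf{C}_{\mathrm{pf}}=\mathsf{C}_{\mathcal{X}}\mathsf{C}_{\mathcal{A}}$. *)

theory Defs
  imports "HOL-Probability.Probability"
begin

text \<open>Finite-horizon MDPs with states encoded as natural numbers (any finite layered
state space embeds into nat) and the two actions a1, a2 encoded as the two elements of bool.
Layers are indexed 1..H by a layer map X.\<close>

record mdp =
  init  :: "nat pmf"
  trans :: "nat \<Rightarrow> bool \<Rightarrow> nat pmf"
  rew   :: "nat \<Rightarrow> bool \<Rightarrow> real pmf"

type_synonym policy = "nat \<Rightarrow> bool pmf"
type_synonym trajectory = "(nat \<times> bool \<times> real) list"

definition layered_mdp :: "(nat \<Rightarrow> nat set) \<Rightarrow> nat \<Rightarrow> mdp \<Rightarrow> bool" where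
  "layered_mdp X H M \<longleftrightarrow>
     (\<forall>h\<in>{1..H}. finite (X h)) \<and>
     (\<forall>h\<in>{1..H}. \<forall>h'\<in>{1..H}. h \<noteq> h' \<longrightarrow> X h \<inter> X h' = {}) \<and>
     set_pmf (init M) \<subseteq> X 1 \<and>
     (\<forall>h\<in>{1..<H}. \<forall>x\<in>X h. \<forall>a. set_pmf (trans M x a) \<subseteq> X (Suc h)) \<and>
     (\<forall>x a. set_pmf (rew M x a) \<subseteq> {-1..1})"

definition state_dist :: "mdp \<Rightarrow> policy \<Rightarrow> nat \<Rightarrow> nat pmf" where
  "state_dist M \<pi> h =
     ((\<lambda>p. bind_pmf p (\<lambda>x. bind_pmf (\<pi> x) (\<lambda>a. trans M x a))) ^^ (h - 1)) (init M)"

definition occupancy :: "mdp \<Rightarrow> policy \<Rightarrow> nat \<Rightarrow> nat \<Rightarrow> bool \<Rightarrow> real" where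
  "occupancy M \<pi> h x a = pmf (state_dist M \<pi> h) x * pmf (\<pi> x) a"

definition pf_conc_le :: "(nat \<Rightarrow> nat set) \<Rightarrow> nat \<Rightarrow> mdp \<Rightarrow> (nat \<Rightarrow> nat \<Rightarrow> bool \<Rightarrow> real) \<Rightarrow> real \<Rightarrow> bool" where
  "pf_conc_le X H M \<mu> C \<longleftrightarrow>
     (\<forall>x'\<in>X 1. \<forall>a'. pmf (init M) x' \<le> C * \<mu> 1 x' a') \<and>
     (\<forall>h\<in>{1..<H}. \<forall>x\<in>X h. \<forall>a. \<forall>x'\<in>X (Suc h). \<forall>a'.
        pmf (trans M x a) x' \<le> C * \<mu> (Suc h) x' a')"

fun traj_from :: "mdp \<Rightarrow> policy \<Rightarrow> nat \<Rightarrow> nat \<Rightarrow> trajectory pmf" where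
  "traj_from M \<pi> 0 x = return_pmf []"
| "traj_from M \<pi> (Suc k) x =
     bind_pmf (\<pi> x) (\<lambda>a. bind_pmf (rew M x a) (\<lambda>r. bind_pmf (trans M x a) (\<lambda>x'.
       map_pmf (\<lambda>\<tau>. (x, a, r) # \<tau>) (traj_from M \<pi> k x'))))"

definition traj :: "mdp \<Rightarrow> policy \<Rightarrow> nat \<Rightarrow> trajectory pmf" where
  "traj M \<pi> H = bind_pmf (init M) (traj_from M \<pi> H)"

definition policy_value :: "mdp \<Rightarrow> policy \<Rightarrow> nat \<Rightarrow> real" where
  "policy_value M \<pi> H = measure_pmf.expectation (traj M \<pi> H) (\<lambda>\<tau>. sum_list (map (\<lambda>(x, a, r). r) \<tau>))"

fun iid :: "nat \<Rightarrow> 'a pmf \<Rightarrow> 'a list pmf" where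
  "iid 0 p = return_pmf []"
| "iid (Suc n) p = bind_pmf p (\<lambda>y. map_pmf (\<lambda>ys. y # ys) (iid n p))"

definition dataset :: "mdp \<Rightarrow> policy \<Rightarrow> nat \<Rightarrow> nat \<Rightarrow> trajectory list pmf" where
  "dataset M \<pi>b H n = iid n (traj M \<pi>b H)"

definition det_policy :: "(nat \<Rightarrow> bool) \<Rightarrow> policy" where
  "det_policy f = (\<lambda>x. return_pmf (f x))"

end

theory Submission
  imports Defs
begin

lemma prob_bind_pmf:
  "measure_pmf.prob (bind_pmf M N) X = measure_pmf.expectation M (\<lambda>x. measure_pmf.prob (N x) X)"
proof -
  have "ennreal (measure_pmf.prob (bind_pmf M N) X) = emeasure (measure_pmf (bind_pmf M N)) X"
    by (simp add: measure_pmf.emeasure_eq_measure)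
  also have "\<dots> = (\<integral>\<^sup>+x. emeasure (measure_pmf (N x)) X \<partial>M)"
    by (rule emeasure_bind_pmf)
  also have "\<dots> = (\<integral>\<^sup>+x. ennreal (measure_pmf.prob (N x) X) \<partial>M)"
    by (simp add: measure_pmf.emeasure_eq_measure)
  also have "\<dots> = ennreal (measure_pmf.expectation M (\<lambda>x. measure_pmf.prob (N x) X))"
    by (rule nn_integral_eq_integral)
       (auto intro!: measure_pmf.integrable_const_bound[where B=1])
  finally show ?thesis
    by (subst (asm) ennreal_inj) (auto intro: integral_nonneg_AE)
qed

lemma pmf_bind_det:
  assumes "\<And>a y. a \<in> set_pmf M \<Longrightarrow> y \<in> set_pmf (f a) \<Longrightarrow> g y = a"
  shows "pmf (bind_pmf M f) x = pmf M (g x) * pmf (f (g x)) x"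
proof -
  have "pmf (bind_pmf M f) x = (\<integral>a. pmf (f a) x \<partial>measure_pmf M)" by (rule pmf_bind)
  also have "\<dots> = (\<Sum>a\<in>{g x}. pmf (f a) x * pmf M a)"
    by (rule integral_measure_pmf_real) (auto simp: set_pmf_iff[symmetric] dest: assms)
  finally show ?thesis by simp
qed

lemma pmf_map_det:
  assumes "\<And>a. g (f a) = a"
  shows "pmf (map_pmf f M) x = (if f (g x) = x then pmf M (g x) else 0)"
  unfolding map_pmf_def
  by (subst pmf_bind_det[where g=g]) (auto simp: assms)

definition coin :: "bool pmf" where "coin = bernoulli_pmf (1/2)"

lemma pmf_coin[simp]: "pmf coin b = 1/2" by (simp add: coin_def)
lemma set_pmf_coin[simp]: "set_pmf coin = UNIV" by (simp add: coin_def)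

lemma coin_xor: "map_pmf (\<lambda>b. b \<noteq> c) coin = coin"
  by (rule pmf_eqI, subst pmf_map_det[where g="\<lambda>b. b \<noteq> c"]) auto

lemma coin_xor': "map_pmf (\<lambda>b. b = (\<not> c)) coin = coin"
  by (rule pmf_eqI, subst pmf_map_det[where g="\<lambda>b. b \<noteq> c"]) auto

lemma coin_not: "map_pmf Not coin = coin"
  using coin_xor[of True] by simp

locale cons =
  fixes H J :: nat
  assumes Jpos: "0 < J" and Hpos: "1 \<le> H"
begin

definition enc :: "nat \<Rightarrow> nat \<Rightarrow> bool \<Rightarrow> bool \<Rightarrow> nat" where
  "enc h j t s = 4 * (J * h + j) + 2 * of_bool t + of_bool s"
definition lay :: "nat \<Rightarrow> nat" where "lay x = x div (4 * J)"
definition jdx :: "nat \<Rightarrow> nat" where "jdx x = x div 4 mod J"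
definition tb :: "nat \<Rightarrow> bool" where "tb x = odd (x div 2)"
definition sb :: "nat \<Rightarrow> bool" where "sb x = odd x"

lemma enc_div4: "enc h j t s div 4 = J * h + j"
  unfolding enc_def by (cases t; cases s) auto

lemma lay_enc[simp]: "j < J \<Longrightarrow> lay (enc h j t s) = h"
proof -
  assume "j < J"
  have "lay (enc h j t s) = enc h j t s div 4 div J" unfolding lay_def
    by (simp add: div_mult2_eq)
  also have "\<dots> = h" using \<open>j < J\<close> by (simp add: enc_div4)
  finally show ?thesis .
qed

lemma jdx_enc[simp]: "j < J \<Longrightarrow> jdx (enc h j t s) = j"
  unfolding jdx_def by (simp add: enc_div4)

lemma tb_enc[simp]: "tb (enc h j t s) = t"
  unfolding tb_def enc_def by (cases t; cases s) auto

lemma sb_enc[simp]: "sb (enc h j t s) = s"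
  unfolding sb_def enc_def by (cases t; cases s) auto

lemma jdx_lt[simp]: "jdx x < J"
  unfolding jdx_def using Jpos by simp

lemma enc_dec: "enc (lay x) (jdx x) (tb x) (sb x) = x"
proof -
  have b: "x div 4 div J = lay x" unfolding lay_def by (simp add: div_mult2_eq)
  have d: "J * lay x + jdx x = x div 4" unfolding jdx_def b[symmetric] by simp
  have c: "x mod 4 = 2 * of_bool (tb x) + of_bool (sb x)"
    unfolding tb_def sb_def using mod_mult2_eq[of x 2 2] by (simp add: mod_2_eq_odd)
  have "x = 4 * (x div 4) + x mod 4" by simp
  then show ?thesis unfolding enc_def d add.assoc c[symmetric] by simp
qed

lemma enc_inj: "j < J \<Longrightarrow> j' < J \<Longrightarrow> (enc h j t s = enc h' j' t' s') = (h = h' \<and> j = j' \<and> t = t' \<and> s = s')"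
proof
  assume jj: "j < J" "j' < J" and e: "enc h j t s = enc h' j' t' s'"
  have "lay (enc h j t s) = lay (enc h' j' t' s')" "jdx (enc h j t s) = jdx (enc h' j' t' s')"
    "tb (enc h j t s) = tb (enc h' j' t' s')" "sb (enc h j t s) = sb (enc h' j' t' s')"
    using e by simp_all
  then show "h = h' \<and> j = j' \<and> t = t' \<and> s = s'" using jj by simp
qed simp

lemma enc_eq_dec: "j < J \<Longrightarrow> (enc h j t s = x) = (h = lay x \<and> j = jdx x \<and> t = tb x \<and> s = sb x)"
  using enc_inj[of j "jdx x" h t s "lay x" "tb x" "sb x"] by (simp add: enc_dec)

definition lam :: "(bool \<times> nat \<times> nat) set \<Rightarrow> nat \<Rightarrow> nat \<Rightarrow> bool" where
  "lam W h j = ((True, h, j) \<in> W)"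
definition nu :: "(bool \<times> nat \<times> nat) set \<Rightarrow> nat \<Rightarrow> nat \<Rightarrow> bool" where
  "nu W h j = ((False, h, j) \<in> W)"
definition beta :: "(bool \<times> nat \<times> nat) set \<Rightarrow> nat \<Rightarrow> bool" where
  "beta W x = (lay x \<noteq> 1 \<and> (tb x \<noteq> lam W (lay x) (jdx x)))"
definition kap :: "(bool \<times> nat \<times> nat) set \<Rightarrow> nat \<Rightarrow> bool" where
  "kap W x = (lay x = 1 \<or> (sb x \<noteq> nu W (lay x) (jdx x)))"
definition tgt :: "(bool \<times> nat \<times> nat) set \<Rightarrow> nat \<Rightarrow> bool \<Rightarrow> bool" where
  "tgt W x a = (if a then beta W x else (beta W x \<noteq> kap W x))"
definition unifJ :: "nat pmf" where "unifJ = pmf_of_set {..<J}"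
definition U :: "nat \<Rightarrow> nat pmf" where
  "U h = bind_pmf unifJ (\<lambda>j. bind_pmf coin (\<lambda>t. map_pmf (\<lambda>s. enc h j t s) coin))"
definition nxt :: "(bool \<times> nat \<times> nat) set \<Rightarrow> nat \<Rightarrow> bool \<Rightarrow> nat pmf" where
  "nxt W h b = bind_pmf unifJ (\<lambda>j. map_pmf (\<lambda>s. enc h j (b \<noteq> lam W h j) s) coin)"
definition rv :: "bool \<Rightarrow> (bool \<times> nat \<times> nat) set \<Rightarrow> nat \<Rightarrow> real" where
  "rv \<sigma> W x = (if lay x = H then (if \<sigma> \<noteq> beta W x then 1 else -1) else 0)"
definition Mdp :: "bool \<Rightarrow> (bool \<times> nat \<times> nat) set \<Rightarrow> mdp" where
  "Mdp \<sigma> W = \<lparr>init = U 1, trans = (\<lambda>x a. nxt W (Suc (lay x)) (tgt W x a)),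
      rew = (\<lambda>x a. return_pmf (rv \<sigma> W x))\<rparr>"
definition Xs :: "nat \<Rightarrow> nat set" where "Xs h = {x. lay x = h}"
definition pib :: policy where "pib = (\<lambda>x. coin)"

lemma set_unifJ[simp]: "set_pmf unifJ = {..<J}"
  unfolding unifJ_def using Jpos by (subst set_pmf_of_set) auto
lemma pmf_unifJ: "pmf unifJ j = (if j < J then 1 / J else 0)"
  unfolding unifJ_def using Jpos by (subst pmf_of_set) auto

lemma pmf_U: "pmf (U h) x = (if lay x = h then 1 / (4 * J) else 0)"
proof -
  have "pmf (U h) x = pmf unifJ (jdx x) * pmf (bind_pmf coin (\<lambda>t. map_pmf (\<lambda>s. enc h (jdx x) t s) coin)) x"
    unfolding U_def by (rule pmf_bind_det) auto
  also have "\<dots> = 1 / J * (pmf coin (tb x) * pmf (map_pmf (\<lambda>s. enc h (jdx x) (tb x) s) coin) x)"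
    by (subst pmf_bind_det[where g=tb]) (auto simp: pmf_unifJ)
  also have "\<dots> = 1 / J * (1/2 * (if lay x = h then 1/2 else 0))"
    by (subst pmf_map_det[where g=sb]) (auto simp: enc_eq_dec)
  finally show ?thesis by simp
qed

lemma pmf_nxt: "pmf (nxt W h b) x = (if lay x = h \<and> tb x = (b \<noteq> lam W h (jdx x)) then 1 / (2 * J) else 0)"
proof -
  have "pmf (nxt W h b) x = pmf unifJ (jdx x) * pmf (map_pmf (\<lambda>s. enc h (jdx x) (b \<noteq> lam W h (jdx x)) s) coin) x"
    unfolding nxt_def by (rule pmf_bind_det) auto
  also have "\<dots> = 1 / J * (if lay x = h \<and> tb x = (b \<noteq> lam W h (jdx x)) then 1/2 else 0)"
    by (subst pmf_map_det[where g=sb]) (auto simp: enc_eq_dec pmf_unifJ)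
  finally show ?thesis by (cases "lay x = h \<and> tb x = (b \<noteq> lam W h (jdx x))") (simp_all only: if_True if_False, simp_all)
qed

lemma set_U: "set_pmf (U h) = {x. lay x = h}"
  using Jpos by (auto simp: set_pmf_iff pmf_U split: if_splits)

lemma set_nxt: "set_pmf (nxt W h b) = {x. lay x = h \<and> tb x = (b \<noteq> lam W h (jdx x))}"
  using Jpos by (auto simp: set_pmf_iff pmf_nxt split: if_splits)

lemma beta_nxt: "h \<noteq> 1 \<Longrightarrow> x \<in> set_pmf (nxt W h b) \<Longrightarrow> beta W x = b"
  by (auto simp: set_nxt beta_def)

lemma coin_bind_xor: "bind_pmf coin (\<lambda>b. G (b \<noteq> c)) = bind_pmf coin G"
proof -
  have "bind_pmf coin G = bind_pmf (map_pmf (\<lambda>b. b \<noteq> c) coin) G" by (simp only: coin_xor)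
  also have "\<dots> = bind_pmf coin (\<lambda>b. G (b \<noteq> c))" by (simp add: bind_map_pmf)
  finally show ?thesis by simp
qed

lemma bind_coin_nxt: "bind_pmf coin (nxt W h) = U h"
proof -
  have "bind_pmf coin (nxt W h) = bind_pmf unifJ (\<lambda>j. bind_pmf coin (\<lambda>b. map_pmf (\<lambda>s. enc h j (b \<noteq> lam W h j) s) coin))"
    unfolding nxt_def by (rule bind_commute_pmf)
  also have "\<dots> = U h" unfolding U_def
    by (subst coin_bind_xor[where G="\<lambda>t. map_pmf (\<lambda>s. enc h _ t s) coin"]) (rule refl)
  finally show ?thesis .
qed

lemma tgt_dist: assumes "h \<ge> 1"
  shows "bind_pmf (U h) (\<lambda>x. bind_pmf coin (\<lambda>a. return_pmf (tgt W x a))) = coin"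
proof -
  have "bind_pmf (U h) (\<lambda>x. bind_pmf coin (\<lambda>a. return_pmf (tgt W x a))) =
     bind_pmf unifJ (\<lambda>j. bind_pmf coin (\<lambda>t. bind_pmf coin (\<lambda>s. bind_pmf coin (\<lambda>a. return_pmf (tgt W (enc h j t s) a)))))"
    unfolding U_def by (simp add: bind_assoc_pmf map_pmf_def bind_return_pmf)
  also have "\<dots> = bind_pmf unifJ (\<lambda>j. coin)"
  proof (rule bind_pmf_cong[OF refl])
    fix j assume "j \<in> set_pmf unifJ"
    then have j: "j < J" by simp
    show "bind_pmf coin (\<lambda>t. bind_pmf coin (\<lambda>s. bind_pmf coin (\<lambda>a. return_pmf (tgt W (enc h j t s) a)))) = coin"
    proof (cases "h = 1")
      case True
      then have "\<And>t s a. tgt W (enc h j t s) a = (\<not> a)" using j by (simp add: tgt_def beta_def kap_def)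
      then show ?thesis by (simp add: map_pmf_def[symmetric] coin_not)
    next
      case False
      define c where "c = (\<lambda>s a. if a then lam W h j else (lam W h j \<noteq> (s \<noteq> nu W h j)))"
      have e: "\<And>t s a. tgt W (enc h j t s) a = (t \<noteq> c s a)" using j False
        by (auto simp: tgt_def beta_def kap_def c_def)
      have "bind_pmf coin (\<lambda>t. bind_pmf coin (\<lambda>s. bind_pmf coin (\<lambda>a. return_pmf (t \<noteq> c s a)))) =
         bind_pmf coin (\<lambda>s. bind_pmf coin (\<lambda>t. bind_pmf coin (\<lambda>a. return_pmf (t \<noteq> c s a))))"
        by (rule bind_commute_pmf)
      also have "\<dots> = bind_pmf coin (\<lambda>s. bind_pmf coin (\<lambda>a. bind_pmf coin (\<lambda>t. return_pmf (t \<noteq> c s a))))"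
        by (subst bind_commute_pmf) (rule refl)
      also have "\<dots> = bind_pmf coin (\<lambda>s. bind_pmf coin (\<lambda>a. coin))"
        by (simp add: map_pmf_def[symmetric] coin_xor')
      also have "\<dots> = coin" by simp
      finally show ?thesis by (simp add: e)
    qed
  qed
  also have "\<dots> = coin" by simp
  finally show ?thesis .
qed

lemma step_U: assumes "h \<ge> 1"
  shows "bind_pmf (U h) (\<lambda>x. bind_pmf coin (\<lambda>a. trans (Mdp \<sigma> W) x a)) = U (Suc h)"
proof -
  have "bind_pmf (U h) (\<lambda>x. bind_pmf coin (\<lambda>a. trans (Mdp \<sigma> W) x a)) =
        bind_pmf (U h) (\<lambda>x. bind_pmf coin (\<lambda>a. bind_pmf (return_pmf (tgt W x a)) (nxt W (Suc h))))"
    by (rule bind_pmf_cong[OF refl]) (auto simp: set_U Mdp_def bind_return_pmf)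
  also have "\<dots> = bind_pmf (bind_pmf (U h) (\<lambda>x. bind_pmf coin (\<lambda>a. return_pmf (tgt W x a)))) (nxt W (Suc h))"
    by (simp add: bind_assoc_pmf)
  also have "\<dots> = U (Suc h)" using assms by (simp add: tgt_dist bind_coin_nxt)
  finally show ?thesis .
qed

lemma state_dist_U: "state_dist (Mdp \<sigma> W) pib (Suc k) = U (Suc k)"
proof (induction k)
  case 0
  then show ?case by (simp add: state_dist_def Mdp_def)
next
  case (Suc k)
  have "state_dist (Mdp \<sigma> W) pib (Suc (Suc k)) =
     bind_pmf (state_dist (Mdp \<sigma> W) pib (Suc k)) (\<lambda>x. bind_pmf coin (\<lambda>a. trans (Mdp \<sigma> W) x a))"
    by (simp add: state_dist_def pib_def)
  also have "\<dots> = U (Suc (Suc k))" using Suc step_U[of "Suc k"] by simp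
  finally show ?case .
qed

lemma finite_Xs: "finite (Xs h)"
proof (rule finite_subset)
  show "Xs h \<subseteq> {..< 4 * J * Suc h}"
  proof
    fix x assume "x \<in> Xs h"
    then have "x div (4 * J) = h" by (simp add: Xs_def lay_def)
    then show "x \<in> {..< 4 * J * Suc h}"
      by (metis div_less_iff_less_mult lessI lessThan_iff mult.commute mult_pos_pos Jpos zero_less_numeral)
  qed
qed simp

lemma rv_range: "rv \<sigma> W x \<in> {-1, 0, 1}"
  unfolding rv_def by auto

lemma layered: "layered_mdp Xs H (Mdp \<sigma> W)"
  unfolding layered_mdp_def
  using finite_Xs[unfolded Xs_def] by (auto simp: Xs_def Mdp_def set_U set_nxt rv_def)

lemma pf: "pf_conc_le Xs H (Mdp \<sigma> W) (occupancy (Mdp \<sigma> W) pib) 4"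
proof -
  have occ: "occupancy (Mdp \<sigma> W) pib (Suc k) x a = 1 / (8 * J)" if "lay x = Suc k" for k x a
    unfolding occupancy_def state_dist_U using that by (simp add: pmf_U pib_def)
  have 1: "pmf (init (Mdp \<sigma> W)) x' \<le> 4 * occupancy (Mdp \<sigma> W) pib 1 x' a'" if "x' \<in> Xs 1" for x' a'
    using that occ[of x' 0] Jpos by (simp add: Xs_def Mdp_def pmf_U frac_le)
  have 2: "pmf (trans (Mdp \<sigma> W) x a) x' \<le> 4 * occupancy (Mdp \<sigma> W) pib (Suc h) x' a'"
    if "x' \<in> Xs (Suc h)" for x a x' a' h
    using that occ[of x' h] Jpos by (simp add: Xs_def Mdp_def pmf_nxt)
  show ?thesis unfolding pf_conc_le_def using 1 2 by blast
qed

definition rsum :: "trajectory \<Rightarrow> real" where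
  "rsum \<tau> = sum_list (map (\<lambda>(x, a, r). r) \<tau>)"

lemma traj_from_value:
  assumes "lay x = h" "h \<ge> 1" "\<not> beta W x" "h + k = Suc H" "k \<ge> 1"
    "\<tau> \<in> set_pmf (traj_from (Mdp \<sigma> W) (det_policy (\<lambda>x. True)) k x)"
  shows "rsum \<tau> = (if \<sigma> then 1 else -1)"
  using assms
proof (induction k arbitrary: x h \<tau>)
  case 0
  then show ?case by simp
next
  case (Suc k)
  from Suc.prems(6) obtain x' \<tau>' where x': "x' \<in> set_pmf (nxt W (Suc h) (tgt W x True))"
    and t': "\<tau>' \<in> set_pmf (traj_from (Mdp \<sigma> W) (det_policy (\<lambda>x. True)) k x')"
    and t: "\<tau> = (x, True, rv \<sigma> W x) # \<tau>'"
    using Suc.prems(1) by (auto simp: det_policy_def Mdp_def)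
  have lx': "lay x' = Suc h" using x' by (simp add: set_nxt)
  have bx': "\<not> beta W x'" using beta_nxt[OF _ x'] Suc.prems(2,3) by (simp add: tgt_def)
  show ?case
  proof (cases "k = 0")
    case True
    then have "\<tau>' = []" using t' by simp
    moreover have "lay x = H" using Suc.prems True by simp
    ultimately show ?thesis using t Suc.prems(3) by (simp add: rsum_def rv_def)
  next
    case False
    have "rsum \<tau>' = (if \<sigma> then 1 else -1)"
      using Suc.IH[OF lx' _ bx' _ _ t'] Suc.prems False by simp
    moreover have "lay x \<noteq> H" using Suc.prems False by simp
    ultimately show ?thesis using t by (simp add: rsum_def rv_def)
  qed
qed

lemma policy_value_Mdp: assumes "H \<ge> 1"
  shows "policy_value (Mdp \<sigma> W) (det_policy (\<lambda>x. True)) H = (if \<sigma> then 1 else -1)"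
proof -
  have "policy_value (Mdp \<sigma> W) (det_policy (\<lambda>x. True)) H =
    measure_pmf.expectation (traj (Mdp \<sigma> W) (det_policy (\<lambda>x. True)) H) (\<lambda>_. if \<sigma> then 1 else -1)"
    unfolding policy_value_def rsum_def[symmetric]
  proof (rule integral_cong_AE)
    show "AE \<tau> in measure_pmf (traj (Mdp \<sigma> W) (det_policy (\<lambda>x. True)) H). rsum \<tau> = (if \<sigma> then 1 else -1)"
      unfolding AE_measure_pmf_iff
    proof
      fix \<tau> assume "\<tau> \<in> set_pmf (traj (Mdp \<sigma> W) (det_policy (\<lambda>x. True)) H)"
      then obtain x where "x \<in> set_pmf (U 1)" "\<tau> \<in> set_pmf (traj_from (Mdp \<sigma> W) (det_policy (\<lambda>x. True)) H x)"
        by (auto simp: traj_def Mdp_def)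
      then show "rsum \<tau> = (if \<sigma> then 1 else -1)"
        using traj_from_value[of x 1 W H] assms by (simp add: set_U beta_def)
    qed
  qed auto
  also have "\<dots> = (if \<sigma> then 1 else -1)" by simp
  finally show ?thesis .
qed

lemma traj_from_support:
  assumes "lay x = h" "\<tau> \<in> set_pmf (traj_from (Mdp \<sigma> W) \<pi> k x)"
  shows "length \<tau> = k \<and> (\<forall>i<k. lay (fst (\<tau> ! i)) = h + i \<and> snd (snd (\<tau> ! i)) \<in> {-1, 0, 1}) \<and>
         (k > 0 \<longrightarrow> fst (\<tau> ! 0) = x)"
  using assms
proof (induction k arbitrary: x h \<tau>)
  case 0
  then show ?case by simp
next
  case (Suc k)
  from Suc.prems(2) obtain a x' \<tau>' where x': "x' \<in> set_pmf (nxt W (Suc h) (tgt W x a))"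
    and t': "\<tau>' \<in> set_pmf (traj_from (Mdp \<sigma> W) \<pi> k x')"
    and t: "\<tau> = (x, a, rv \<sigma> W x) # \<tau>'"
    using Suc.prems(1) by (auto simp: Mdp_def)
  have lx': "lay x' = Suc h" using x' by (simp add: set_nxt)
  note IH = Suc.IH[OF lx' t']
  show ?case
  proof (intro conjI allI impI)
    show "length \<tau> = Suc k" using IH t by simp
    show "fst (\<tau> ! 0) = x" using t by simp
    fix i assume i: "i < Suc k"
    show "lay (fst (\<tau> ! i)) = h + i" using IH t i Suc.prems(1) by (cases i) auto
    show "snd (snd (\<tau> ! i)) \<in> {-1, 0, 1}" using IH t i rv_range by (cases i) auto
  qed
qed

definition rvB :: "bool \<Rightarrow> (nat \<Rightarrow> bool) \<Rightarrow> nat \<Rightarrow> real" where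
  "rvB \<sigma> B x = (if lay x = H then (if \<sigma> \<noteq> B x then 1 else -1) else 0)"
definition tg :: "(nat \<Rightarrow> bool) \<Rightarrow> (nat \<Rightarrow> bool) \<Rightarrow> nat \<Rightarrow> bool \<Rightarrow> bool" where
  "tg B K x a = (if a then B x else (B x \<noteq> K x))"

lemma rv_rvB: "rv \<sigma> W x = rvB \<sigma> (beta W) x" by (simp add: rv_def rvB_def)
lemma tgt_tg: "tgt W x a = tg (beta W) (kap W) x a" by (simp add: tgt_def tg_def)

fun tq :: "bool \<Rightarrow> (nat \<Rightarrow> bool) \<Rightarrow> (nat \<Rightarrow> bool) \<Rightarrow> nat \<Rightarrow> trajectory \<Rightarrow> real" where
  "tq \<sigma> B K x [] = 1"
| "tq \<sigma> B K x [(y, a, r)] = (if y = x then 1/2 * (if r = rvB \<sigma> B x then 1 else 0) else 0)"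
| "tq \<sigma> B K x ((y, a, r) # (z, a', r') # \<tau>) = (if y = x then 1/2 * (if r = rvB \<sigma> B x then 1 else 0) *
      (if lay z = Suc (lay x) \<and> B z = tg B K x a then 1 / (2 * J) else 0) * tq \<sigma> B K z ((z, a', r') # \<tau>) else 0)"

lemma pmf_trans: assumes "lay x \<ge> 1"
  shows "pmf (trans (Mdp \<sigma> W) x a) z = (if lay z = Suc (lay x) \<and> beta W z = tgt W x a then 1 / (2 * J) else 0)"
  using assms by (auto simp: Mdp_def pmf_nxt beta_def)

lemma traj_from_Suc:
  "traj_from (Mdp \<sigma> W) pib (Suc k) x =
     bind_pmf coin (\<lambda>a. bind_pmf (trans (Mdp \<sigma> W) x a) (\<lambda>x'. map_pmf (\<lambda>\<tau>. (x, a, rv \<sigma> W x) # \<tau>) (traj_from (Mdp \<sigma> W) pib k x')))"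
  by (simp add: pib_def Mdp_def bind_return_pmf)

lemma hd_traj_from: "k > 0 \<Longrightarrow> t \<in> set_pmf (traj_from (Mdp \<sigma> W) \<pi> k a) \<Longrightarrow> fst (hd t) = a"
  using traj_from_support[OF refl, of t \<sigma> W \<pi> k a] by (cases t) auto

lemma pmf_traj_from:
  assumes "lay x \<ge> 1"
  shows "pmf (traj_from (Mdp \<sigma> W) pib k x) \<tau> = (if length \<tau> = k then tq \<sigma> (beta W) (kap W) x \<tau> else 0)"
  using assms
proof (induction k arbitrary: x \<tau>)
  case 0
  then show ?case by (cases \<tau>) auto
next
  case (Suc k)
  show ?case
  proof (cases \<tau>)
    case Nil
    have "\<tau> \<notin> set_pmf (traj_from (Mdp \<sigma> W) pib (Suc k) x)"
      using Nil by (auto simp: traj_from_Suc)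
    then show ?thesis using Nil by (simp add: set_pmf_iff del: traj_from.simps)
  next
    case (Cons st \<tau>')
    obtain y b r where st: "st = (y, b, r)" by (cases st) auto
    define G where "G = (\<lambda>a. bind_pmf (trans (Mdp \<sigma> W) x a) (\<lambda>x'. map_pmf (\<lambda>\<tau>. (x, a, rv \<sigma> W x) # \<tau>) (traj_from (Mdp \<sigma> W) pib k x')))"
    have "pmf (traj_from (Mdp \<sigma> W) pib (Suc k) x) \<tau> = pmf coin b * pmf (G b) \<tau>"
      unfolding traj_from_Suc G_def[symmetric] Cons st
      by (subst pmf_bind_det[where g="\<lambda>\<tau>. fst (snd (hd \<tau>))"]) (auto simp: G_def)
    also have "\<dots> = (if length \<tau> = Suc k then tq \<sigma> (beta W) (kap W) x \<tau> else 0)"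
    proof (cases "k = 0")
      case True
      have "G b = return_pmf [(x, b, rv \<sigma> W x)]" using True by (simp add: G_def map_pmf_def[symmetric])
      then show ?thesis using True Cons st by (auto simp: rv_rvB)
    next
      case False
      define z where "z = fst (hd \<tau>')"
      have supp: "\<And>x' t. x' \<in> set_pmf (trans (Mdp \<sigma> W) x b) \<Longrightarrow> t \<in> set_pmf (map_pmf (\<lambda>\<tau>. (x, b, rv \<sigma> W x) # \<tau>) (traj_from (Mdp \<sigma> W) pib k x')) \<Longrightarrow> fst (hd (tl t)) = x'"
      proof -
        fix x' t assume x': "x' \<in> set_pmf (trans (Mdp \<sigma> W) x b)"
          and t: "t \<in> set_pmf (map_pmf (\<lambda>\<tau>. (x, b, rv \<sigma> W x) # \<tau>) (traj_from (Mdp \<sigma> W) pib k x'))"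
        obtain t' where t': "t' \<in> set_pmf (traj_from (Mdp \<sigma> W) pib k x')" "t = (x, b, rv \<sigma> W x) # t'"
          using t by auto
        have "length t' = k \<and> fst (t' ! 0) = x'"
          using traj_from_support[OF refl t'(1)] False by simp
        then show "fst (hd (tl t)) = x'" using t'(2) False by (cases t') auto
      qed
      have "pmf (G b) \<tau> = pmf (trans (Mdp \<sigma> W) x b) z *
          pmf (map_pmf (\<lambda>\<tau>. (x, b, rv \<sigma> W x) # \<tau>) (traj_from (Mdp \<sigma> W) pib k z)) \<tau>"
        unfolding G_def z_def Cons by (subst pmf_bind_det[where g="\<lambda>t. fst (hd (tl t))"]) (use False in \<open>auto dest: hd_traj_from\<close>)
      also have "\<dots> = pmf (trans (Mdp \<sigma> W) x b) z *
          (if (x, b, rv \<sigma> W x) # \<tau>' = \<tau> then pmf (traj_from (Mdp \<sigma> W) pib k z) \<tau>' else 0)"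
        unfolding Cons by (subst pmf_map_det[where g=tl]) auto
      finally have eq: "pmf (G b) \<tau> = \<dots>" .
      show ?thesis
      proof (cases "pmf (trans (Mdp \<sigma> W) x b) z = 0")
        case True
        then have "\<not> (lay z = Suc (lay x) \<and> beta W z = tgt W x b)"
          using pmf_trans[OF Suc.prems, of \<sigma> W b z] Jpos by (auto split: if_splits)
        then show ?thesis using eq True Cons st False
          by (cases \<tau>') (auto simp: z_def tgt_tg split: if_splits)
      next
        case nz: False
        then have lz: "lay z = Suc (lay x)" "beta W z = tgt W x b"
          using pmf_trans[OF Suc.prems, of \<sigma> W b z] by (auto split: if_splits)
        have IH: "pmf (traj_from (Mdp \<sigma> W) pib k z) \<tau>' = (if length \<tau>' = k then tq \<sigma> (beta W) (kap W) z \<tau>' else 0)"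
          using Suc.IH[of z] lz by simp
        show ?thesis
        proof (cases \<tau>')
          case Nil
          then show ?thesis using eq IH Cons st False by simp
        next
          case (Cons st' \<tau>'')
          obtain z' b' r' where st': "st' = (z', b', r')" by (cases st') auto
          have "z' = z" using Cons st' by (simp add: z_def)
          then show ?thesis using eq IH \<open>\<tau> = st # \<tau>'\<close> Cons st st' lz pmf_trans[OF Suc.prems, of \<sigma> W b z]
            by (auto simp: tgt_tg rv_rvB)
        qed
      qed
    qed
    finally show ?thesis .
  qed
qed

lemma init_Mdp[simp]: "init (Mdp \<sigma> W) = U 1" by (simp add: Mdp_def)

lemma pmf_traj: "pmf (traj (Mdp \<sigma> W) pib H) \<tau> =
   (if length \<tau> = H then pmf (U 1) (fst (hd \<tau>)) * tq \<sigma> (beta W) (kap W) (fst (hd \<tau>)) \<tau> else 0)"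
proof -
  have "pmf (traj (Mdp \<sigma> W) pib H) \<tau> = pmf (U 1) (fst (hd \<tau>)) * pmf (traj_from (Mdp \<sigma> W) pib H (fst (hd \<tau>))) \<tau>"
    unfolding traj_def by (subst pmf_bind_det[where g="\<lambda>t. fst (hd t)"]) (use Hpos hd_traj_from[of H] in auto)
  also have "\<dots> = (if length \<tau> = H then pmf (U 1) (fst (hd \<tau>)) * tq \<sigma> (beta W) (kap W) (fst (hd \<tau>)) \<tau> else 0)"
  proof (cases "lay (fst (hd \<tau>)) = 1")
    case True
    then show ?thesis by (simp add: pmf_traj_from)
  next
    case False
    then show ?thesis by (simp add: pmf_U)
  qed
  finally show ?thesis .
qed

lemma tq_agree:
  "(\<forall>z\<in>fst ` set \<tau>. B1 z = B2 z \<and> K1 z = K2 z) \<Longrightarrow> tq \<sigma> B1 K1 x \<tau> = tq \<sigma> B2 K2 x \<tau>"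
proof (induction \<sigma> B1 K1 x \<tau> rule: tq.induct)
  case (1 \<sigma> B K x)
  then show ?case by simp
next
  case (2 \<sigma> B K x y a r)
  then show ?case by (auto simp: rvB_def)
next
  case (3 \<sigma> B K x y a r z a' r' \<tau>)
  show ?case
  proof (cases "y = x")
    case True
    have pre: "\<forall>w\<in>fst ` set ((z, a', r') # \<tau>). B w = B2 w \<and> K w = K2 w" using 3(2) by auto
    have IH: "tq \<sigma> B K z ((z, a', r') # \<tau>) = tq \<sigma> B2 K2 z ((z, a', r') # \<tau>)" using 3(1)[OF True pre] .
    have e: "B x = B2 x" "K x = K2 x" "B z = B2 z" using 3(2) True by auto
    have r1: "rvB \<sigma> B x = rvB \<sigma> B2 x" using e by (simp add: rvB_def)
    have r2: "tg B K x a = tg B2 K2 x a" using e by (simp add: tg_def)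
    show ?thesis by (simp only: tq.simps r1 r2 e(3) IH)
  qed simp
qed

lemma tq_flipAll:
  "(\<forall>z\<in>fst ` set \<tau>. B' z = (\<not> B z)) \<Longrightarrow> (\<forall>i. Suc i < length \<tau> \<longrightarrow> fst (snd (\<tau> ! i))) \<Longrightarrow>
    tq \<sigma> B K x \<tau> = tq (\<not> \<sigma>) B' K' x \<tau>"
proof (induction \<sigma> B K x \<tau> rule: tq.induct)
  case (1 \<sigma> B K x)
  then show ?case by simp
next
  case (2 \<sigma> B K x y a r)
  then show ?case by (auto simp: rvB_def)
next
  case (3 \<sigma> B K x y a r z a' r' \<tau>)
  show ?case
  proof (cases "y = x")
    case True
    have IH: "tq \<sigma> B K z ((z, a', r') # \<tau>) = tq (\<not> \<sigma>) B' K' z ((z, a', r') # \<tau>)"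
    proof (rule 3(1)[OF True])
      show "\<forall>z\<in>fst ` set ((z, a', r') # \<tau>). B' z = (\<not> B z)" using 3(2) by auto
      show "\<forall>i. Suc i < length ((z, a', r') # \<tau>) \<longrightarrow> fst (snd (((z, a', r') # \<tau>) ! i))"
        using 3(3) by (metis Suc_less_eq length_Cons nth_Cons_Suc)
    qed
    have a: "a" using 3(3)[rule_format, of 0] by simp
    have e: "B' x = (\<not> B x)" "B' z = (\<not> B z)" using 3(2) True by auto
    have r1: "rvB \<sigma> B x = rvB (\<not> \<sigma>) B' x" using e by (simp add: rvB_def)
    have r2: "(B z = tg B K x a) = (B' z = tg B' K' x a)" using e a by (simp add: tg_def)
    show ?thesis by (simp only: tq.simps r1 r2 IH)
  qed simp
qed

lemma tq_flipAt:
  assumes "distinct (map fst \<tau>)" "Suc k < length \<tau>" "\<not> fst (snd (\<tau> ! k))"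
    "\<forall>i. k < i \<and> Suc i < length \<tau> \<longrightarrow> fst (snd (\<tau> ! i))"
    "\<forall>i\<le>k. lay (fst (\<tau> ! i)) \<noteq> H"
    "\<And>z. B' z = (if z \<in> fst ` set (drop (Suc k) \<tau>) then \<not> B z else B z)"
    "\<And>z. K' z = (if z = fst (\<tau> ! k) then \<not> K z else K z)"
  shows "tq \<sigma> B K x \<tau> = tq (\<not> \<sigma>) B' K' x \<tau>"
  using assms
proof (induction \<tau> arbitrary: x k)
  case Nil
  then show ?case by simp
next
  case (Cons st \<tau>1)
  obtain y a r where st: "st = (y, a, r)" by (cases st) auto
  from Cons.prems(2) obtain z a' r' \<tau>2 where t1: "\<tau>1 = (z, a', r') # \<tau>2"
    by (cases \<tau>1) auto
  have ly: "lay y \<noteq> H" using Cons.prems(5)[rule_format, of 0] st by simp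
  have yz: "y \<noteq> z" "y \<notin> fst ` set \<tau>2" using Cons.prems(1) st t1 by auto
  show ?case
  proof (cases k)
    case 0
    have na: "\<not> a" using Cons.prems(3) 0 st by simp
    have B'y: "B' y = B y" using Cons.prems(6)[of y] 0 st t1 yz by auto
    have B'z: "B' z = (\<not> B z)" using Cons.prems(6)[of z] 0 st t1 by auto
    have K'y: "K' y = (\<not> K y)" using Cons.prems(7)[of y] 0 st by auto
    have tail: "tq \<sigma> B K z \<tau>1 = tq (\<not> \<sigma>) B' K' z \<tau>1"
    proof (rule tq_flipAll)
      show "\<forall>z\<in>fst ` set \<tau>1. B' z = (\<not> B z)" using Cons.prems(6) 0 st by auto
      show "\<forall>i. Suc i < length \<tau>1 \<longrightarrow> fst (snd (\<tau>1 ! i))"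
        using Cons.prems(4) 0 by (metis Suc_less_eq length_Cons nth_Cons_Suc zero_less_Suc)
    qed
    show ?thesis unfolding st t1 using tail[unfolded t1] na B'y B'z K'y ly
      by (auto simp: rvB_def tg_def)
  next
    case (Suc k')
    have B'y: "B' y = B y" using Cons.prems(6)[of y] Suc st t1 yz
      by (auto dest: in_set_dropD)
    have m: "fst (\<tau>1 ! k') \<in> fst ` set \<tau>1" using Cons.prems(2) Suc by auto
    have "y \<notin> fst ` set \<tau>1" using Cons.prems(1) st by auto
    then have K'y: "K' y = K y" using Cons.prems(7)[of y] Suc m by auto
    have "z \<notin> fst ` set \<tau>2" using Cons.prems(1) t1 by auto
    moreover have "drop (Suc k) (st # \<tau>1) = drop k' \<tau>2" using Suc t1 by simp
    ultimately have "z \<notin> fst ` set (drop (Suc k) (st # \<tau>1))"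
      by (metis image_mono in_mono set_drop_subset)
    then have B'z: "B' z = B z" using Cons.prems(6)[of z] by simp
    have tail: "tq \<sigma> B K z \<tau>1 = tq (\<not> \<sigma>) B' K' z \<tau>1"
    proof (rule Cons.IH)
      show "distinct (map fst \<tau>1)" using Cons.prems(1) by simp
      show "Suc k' < length \<tau>1" using Cons.prems(2) Suc by simp
      show "\<not> fst (snd (\<tau>1 ! k'))" using Cons.prems(3) Suc by simp
      show "\<forall>i. k' < i \<and> Suc i < length \<tau>1 \<longrightarrow> fst (snd (\<tau>1 ! i))"
        using Cons.prems(4) Suc by (metis Suc_less_eq length_Cons nth_Cons_Suc)
      show "\<forall>i\<le>k'. lay (fst (\<tau>1 ! i)) \<noteq> H"
        using Cons.prems(5) Suc by (metis Suc_le_mono nth_Cons_Suc)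
      show "\<And>z. B' z = (if z \<in> fst ` set (drop (Suc k') \<tau>1) then \<not> B z else B z)"
        using Cons.prems(6) Suc by simp
      show "\<And>z. K' z = (if z = fst (\<tau>1 ! k') then \<not> K z else K z)"
        using Cons.prems(7) Suc by simp
    qed
    show ?thesis unfolding st t1 using tail[unfolded t1] B'y K'y B'z ly
      by (auto simp: rvB_def tg_def)
  qed
qed

end



lemma prob_bind_le:
  assumes "\<And>x. x \<in> set_pmf p \<Longrightarrow> measure_pmf.prob (f x) A \<le> c"
  shows "measure_pmf.prob (bind_pmf p f) A \<le> c"
  unfolding prob_bind_pmf
  by (rule measure_pmf.integral_le_const)
     (auto intro!: measure_pmf.integrable_const_bound[where B=1] simp: AE_measure_pmf_iff assms)

lemma iid_Suc_prob:
  "measure_pmf.prob (iid (Suc n) p) E = measure_pmf.expectation p (\<lambda>y. measure_pmf.prob (iid n p) {d. y # d \<in> E})"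
  by (simp add: prob_bind_pmf vimage_def)

lemma iid_union: "measure_pmf.prob (iid n p) {d. \<exists>x\<in>set d. x \<in> S} \<le> n * measure_pmf.prob p S"
proof (induction n)
  case 0
  then show ?case by simp
next
  case (Suc n)
  let ?E = "{d. \<exists>x\<in>set d. x \<in> S}"
  have "measure_pmf.prob (iid (Suc n) p) ?E = measure_pmf.expectation p (\<lambda>y. measure_pmf.prob (iid n p) {d. y # d \<in> ?E})"
    by (rule iid_Suc_prob)
  also have "\<dots> \<le> measure_pmf.expectation p (\<lambda>y. indicator S y + n * measure_pmf.prob p S)"
  proof (rule integral_mono)
    show "integrable (measure_pmf p) (\<lambda>y. measure_pmf.prob (iid n p) {d. y # d \<in> ?E})"
      by (rule measure_pmf.integrable_const_bound[where B=1]) auto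
    show "integrable (measure_pmf p) (\<lambda>y. indicator S y + real n * measure_pmf.prob p S)"
    proof (rule measure_pmf.integrable_const_bound[where B="1 + real n"])
      have b: "real n * measure_pmf.prob p S \<le> real n" by (simp add: mult_left_le measure_pmf.prob_le_1)
      show "AE x in measure_pmf p. norm (indicator S x + real n * measure_pmf.prob p S) \<le> 1 + real n"
        using b by (auto simp: indicator_def)
    qed simp
    fix y
    show "measure_pmf.prob (iid n p) {d. y # d \<in> ?E} \<le> indicator S y + n * measure_pmf.prob p S"
    proof (cases "y \<in> S")
      case True
      then show ?thesis by (simp add: measure_pmf.prob_le_1)
    next
      case False
      then have "{d. y # d \<in> ?E} = ?E" by auto
      then show ?thesis using Suc False by simp
    qed
  qed
  also have "\<dots> = measure_pmf.prob p S + n * measure_pmf.prob p S"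
  proof -
    have "integrable (measure_pmf p) (indicator S :: 'a \<Rightarrow> real)"
      by (rule measure_pmf.integrable_const_bound[where B=1]) (auto simp: indicator_def)
    then show ?thesis by simp
  qed
  finally show ?case by (simp add: algebra_simps)
qed

fun collR :: "('a \<Rightarrow> 'a \<Rightarrow> bool) \<Rightarrow> 'a list \<Rightarrow> bool" where
  "collR R [] = False"
| "collR R (x # d) = ((\<exists>y\<in>set d. R x y) \<or> collR R d)"

lemma iid_coll:
  assumes "\<And>x. x \<in> set_pmf p \<Longrightarrow> measure_pmf.prob p {y. R x y} \<le> c" "c \<ge> 0"
  shows "measure_pmf.prob (iid n p) {d. collR R d} \<le> n * n * c"
proof (induction n)
  case 0
  then show ?case by simp
next
  case (Suc n)
  have "measure_pmf.prob (iid (Suc n) p) {d. collR R d} = measure_pmf.expectation p (\<lambda>x. measure_pmf.prob (iid n p) {d. collR R (x # d)})"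
    by (simp only: iid_Suc_prob mem_Collect_eq)
  also have "\<dots> \<le> measure_pmf.expectation p (\<lambda>x. n * c + n * n * c)"
  proof (rule integral_mono_AE)
    show "integrable (measure_pmf p) (\<lambda>x. measure_pmf.prob (iid n p) {d. collR R (x # d)})"
      by (rule measure_pmf.integrable_const_bound[where B=1]) auto
    show "integrable (measure_pmf p) (\<lambda>x. n * c + n * n * c)" by simp
    show "AE x in measure_pmf p. measure_pmf.prob (iid n p) {d. collR R (x # d)} \<le> n * c + n * n * c"
      unfolding AE_measure_pmf_iff
    proof
      fix x assume x: "x \<in> set_pmf p"
      have "measure_pmf.prob (iid n p) {d. collR R (x # d)} \<le>
        measure_pmf.prob (iid n p) {d. \<exists>y\<in>set d. y \<in> {y. R x y}} + measure_pmf.prob (iid n p) {d. collR R d}"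
        by (rule order_trans[OF _ measure_Un_le]) (auto intro!: measure_pmf.finite_measure_mono)
      also have "\<dots> \<le> n * c + n * n * c"
      proof -
        have "real n * measure_pmf.prob p {y. R x y} \<le> real n * c"
          using assms(1)[OF x] by (rule mult_left_mono) simp
        then show ?thesis using iid_union[of n p "{y. R x y}"] Suc by simp
      qed
      finally show "measure_pmf.prob (iid n p) {d. collR R (x # d)} \<le> n * c + n * n * c" .
    qed
  qed
  also have "\<dots> = n * c + n * n * c" by simp
  also have "\<dots> \<le> real (Suc n) * real (Suc n) * c" using assms(2) by (simp add: algebra_simps)
  finally show ?case .
qed

lemma iid_coin_prefix: "k \<le> m \<Longrightarrow> measure_pmf.prob (iid m coin) {as. \<forall>i<k. as ! i} = (1/2) ^ k"
proof (induction m arbitrary: k)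
  case 0
  then show ?case by simp
next
  case (Suc m)
  show ?case
  proof (cases k)
    case 0
    then show ?thesis by simp
  next
    case (Suc k')
    have "measure_pmf.prob (iid (Suc m) coin) {as. \<forall>i<k. as ! i} =
       measure_pmf.expectation coin (\<lambda>a. measure_pmf.prob (iid m coin) {as. a # as \<in> {as. \<forall>i<k. as ! i}})"
      by (rule iid_Suc_prob)
    also have "\<dots> = measure_pmf.expectation coin (\<lambda>a. if a then (1/2) ^ k' else 0)"
    proof (rule Bochner_Integration.integral_cong[OF refl])
      fix a
      have "{as. a # as \<in> {as. \<forall>i<k. as ! i}} = (if a then {as. \<forall>i<k'. as ! i} else {})"
        using Suc by (auto simp: All_less_Suc2)
      then show "measure_pmf.prob (iid m coin) {as. a # as \<in> {as. \<forall>i<k. as ! i}} = (if a then (1/2) ^ k' else 0)"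
        using Suc.IH[of k'] Suc.prems \<open>k = Suc k'\<close> by simp
    qed
    also have "\<dots> = (1/2) ^ k"
      by (subst integral_measure_pmf_real[where A=UNIV]) (auto simp: \<open>k = Suc k'\<close> UNIV_bool)
    finally show ?thesis .
  qed
qed


context cons begin

definition symd :: "'a set \<Rightarrow> 'a set \<Rightarrow> 'a set" where "symd A B = (A - B) \<union> (B - A)"

definition st :: "trajectory \<Rightarrow> nat \<Rightarrow> nat" where "st \<tau> i = fst (\<tau> ! i)"
definition ac :: "trajectory \<Rightarrow> nat \<Rightarrow> bool" where "ac \<tau> i = fst (snd (\<tau> ! i))"
definition valid :: "trajectory \<Rightarrow> bool" where
  "valid \<tau> \<longleftrightarrow> length \<tau> = H \<and> (\<forall>i<H. lay (st \<tau> i) = Suc i \<and> snd (snd (\<tau> ! i)) \<in> {-1, 0, 1})"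
definition okt :: "trajectory \<Rightarrow> bool" where
  "okt \<tau> \<longleftrightarrow> (\<exists>i. 1 \<le> i \<and> i + 2 \<le> H \<and> \<not> ac \<tau> i)"
definition kk :: "trajectory \<Rightarrow> nat" where
  "kk \<tau> = Max {i. 1 \<le> i \<and> i + 2 \<le> H \<and> \<not> ac \<tau> i}"
definition vis :: "trajectory \<Rightarrow> (nat \<times> nat) set" where
  "vis \<tau> = {(lay (st \<tau> i), jdx (st \<tau> i)) | i. 1 \<le> i \<and> i < length \<tau>}"
definition Ff :: "trajectory \<Rightarrow> (bool \<times> nat \<times> nat) set" where
  "Ff \<tau> = insert (False, lay (st \<tau> (kk \<tau>)), jdx (st \<tau> (kk \<tau>)))
     {(True, lay (st \<tau> i), jdx (st \<tau> i)) | i. kk \<tau> < i \<and> i < length \<tau>}"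

lemma kk_props: assumes "okt \<tau>"
  shows "1 \<le> kk \<tau>" "kk \<tau> + 2 \<le> H" "\<not> ac \<tau> (kk \<tau>)" "\<And>i. kk \<tau> < i \<Longrightarrow> i + 2 \<le> H \<Longrightarrow> ac \<tau> i"
proof -
  let ?S = "{i. 1 \<le> i \<and> i + 2 \<le> H \<and> \<not> ac \<tau> i}"
  have fin: "finite ?S" by (rule finite_subset[of _ "{..H}"]) auto
  have ne: "?S \<noteq> {}" using assms unfolding okt_def by auto
  have "kk \<tau> \<in> ?S" unfolding kk_def using Max_in[OF fin ne] .
  then show "1 \<le> kk \<tau>" "kk \<tau> + 2 \<le> H" "\<not> ac \<tau> (kk \<tau>)" by auto
  fix i assume "kk \<tau> < i" "i + 2 \<le> H"
  then show "ac \<tau> i" using Max_ge[OF fin, of i] unfolding kk_def by (cases "1 \<le> i") auto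
qed

lemma valid_st_inj: "valid \<tau> \<Longrightarrow> i < H \<Longrightarrow> i' < H \<Longrightarrow> st \<tau> i = st \<tau> i' \<Longrightarrow> i = i'"
  unfolding valid_def by (metis Suc_inject)

lemma valid_distinct: "valid \<tau> \<Longrightarrow> distinct (map fst \<tau>)"
proof -
  assume v: "valid \<tau>"
  then have len: "length \<tau> = H" by (simp add: valid_def)
  show ?thesis unfolding distinct_conv_nth
  proof (intro allI impI)
    fix i j assume "i < length (map fst \<tau>)" "j < length (map fst \<tau>)" "i \<noteq> j"
    then show "map fst \<tau> ! i \<noteq> map fst \<tau> ! j"
      using valid_st_inj[OF v, of i j] len by (auto simp: st_def)
  qed
qed

lemma Ff_True: assumes "valid \<tau>" "i < H"
  shows "((True, Suc i, jdx (st \<tau> i)) \<in> Ff \<tau>) = (kk \<tau> < i)"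
proof
  assume "(True, Suc i, jdx (st \<tau> i)) \<in> Ff \<tau>"
  then obtain i' where "kk \<tau> < i'" "i' < length \<tau>" "lay (st \<tau> i') = Suc i"
    unfolding Ff_def by auto
  then show "kk \<tau> < i" using assms unfolding valid_def by auto
next
  assume k: "kk \<tau> < i"
  have "lay (st \<tau> i) = Suc i" "i < length \<tau>" using assms unfolding valid_def by auto
  then show "(True, Suc i, jdx (st \<tau> i)) \<in> Ff \<tau>"
    using k unfolding Ff_def by (intro insertI2 CollectI exI[of _ i]) auto
qed

lemma Ff_False: assumes "valid \<tau>" "i < H" "okt \<tau>"
  shows "((False, Suc i, jdx (st \<tau> i)) \<in> Ff \<tau>) = (i = kk \<tau>)"
proof
  assume "(False, Suc i, jdx (st \<tau> i)) \<in> Ff \<tau>"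
  then have "lay (st \<tau> (kk \<tau>)) = Suc i" unfolding Ff_def by auto
  moreover have "kk \<tau> < H" using kk_props(2)[OF assms(3)] by simp
  ultimately show "i = kk \<tau>" using assms unfolding valid_def by auto
next
  assume "i = kk \<tau>"
  then show "(False, Suc i, jdx (st \<tau> i)) \<in> Ff \<tau>"
    using assms kk_props(2)[OF assms(3)] unfolding Ff_def valid_def by auto
qed

lemma flipW:
  assumes v: "valid \<tau>" and ok: "okt \<tau>" and G: "\<And>b p. p \<in> vis \<tau> \<Longrightarrow> (b, p) \<notin> G"
  shows "tq \<sigma> (beta W) (kap W) x \<tau> = tq (\<not> \<sigma>) (beta (symd W (Ff \<tau> \<union> G))) (kap (symd W (Ff \<tau> \<union> G))) x \<tau>"
proof -
  define k where "k = kk \<tau>"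
  define W' where "W' = symd W (Ff \<tau> \<union> G)"
  note kp = kk_props[OF ok, folded k_def]
  have len: "length \<tau> = H" using v by (simp add: valid_def)
  have lay_st: "\<And>i. i < H \<Longrightarrow> lay (st \<tau> i) = Suc i" using v by (simp add: valid_def)
  define B' where "B' = (\<lambda>z. if z \<in> fst ` set (drop (Suc k) \<tau>) then \<not> beta W z else beta W z)"
  define K' where "K' = (\<lambda>z. if z = fst (\<tau> ! k) then \<not> kap W z else kap W z)"
  have step1: "tq \<sigma> (beta W) (kap W) x \<tau> = tq (\<not> \<sigma>) B' K' x \<tau>"
  proof (rule tq_flipAt)
    show "distinct (map fst \<tau>)" using valid_distinct[OF v] .
    show "Suc k < length \<tau>" using kp len by simp
    show "\<not> fst (snd (\<tau> ! k))" using kp(3) by (simp add: ac_def)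
    show "\<forall>i. k < i \<and> Suc i < length \<tau> \<longrightarrow> fst (snd (\<tau> ! i))"
      using kp(4) len by (auto simp: ac_def)
    show "\<forall>i\<le>k. lay (fst (\<tau> ! i)) \<noteq> H"
      using lay_st kp(2) by (auto simp: st_def)
  qed (simp_all add: B'_def K'_def)
  have step2: "tq (\<not> \<sigma>) B' K' x \<tau> = tq (\<not> \<sigma>) (beta W') (kap W') x \<tau>"
  proof (rule tq_agree, rule ballI)
    fix z assume "z \<in> fst ` set \<tau>"
    then obtain i where i: "i < H" "z = st \<tau> i" using len by (auto simp: in_set_conv_nth st_def)
    have lz: "lay z = Suc i" using lay_st i by simp
    have notG: "\<And>b. i \<ge> 1 \<Longrightarrow> (b, Suc i, jdx z) \<notin> G"
      using G i len lz unfolding vis_def by force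
    have indrop: "(z \<in> fst ` set (drop (Suc k) \<tau>)) = (k < i)"
    proof
      assume "z \<in> fst ` set (drop (Suc k) \<tau>)"
      then obtain i' where "i' < length \<tau> - Suc k" "z = st \<tau> (Suc k + i')"
        by (auto simp: in_set_conv_nth st_def)
      then show "k < i" using valid_st_inj[OF v, of i "Suc k + i'"] i len by auto
    next
      assume "k < i"
      then show "z \<in> fst ` set (drop (Suc k) \<tau>)"
        using i len by (force simp: in_set_conv_nth st_def intro: exI[of _ "i - Suc k"])
    qed
    have eqk: "(z = fst (\<tau> ! k)) = (i = k)"
      using valid_st_inj[OF v, of i k] i kp len by (auto simp: st_def)
    show "B' z = beta W' z \<and> K' z = kap W' z"
    proof (cases "i = 0")
      case True
      then show ?thesis using lz indrop eqk kp(1) by (simp add: B'_def K'_def beta_def kap_def)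
    next
      case False
      have lamW': "lam W' (Suc i) (jdx z) = (lam W (Suc i) (jdx z) \<noteq> (k < i))"
        using Ff_True[OF v i(1)] notG[of True] False i(2)
        by (auto simp: lam_def W'_def symd_def k_def)
      have nuW': "nu W' (Suc i) (jdx z) = (nu W (Suc i) (jdx z) \<noteq> (i = k))"
        using Ff_False[OF v i(1) ok] notG[of False] False i(2)
        by (auto simp: nu_def W'_def symd_def k_def)
      show ?thesis using lz indrop eqk lamW' nuW' False
        by (auto simp: B'_def K'_def beta_def kap_def)
    qed
  qed
  show ?thesis using step1 step2 by (simp add: W'_def)
qed

fun goodl :: "trajectory list \<Rightarrow> bool" where
  "goodl [] = True"
| "goodl (\<tau> # d) = (okt \<tau> \<and> vis \<tau> \<inter> (\<Union>\<tau>'\<in>set d. vis \<tau>') = {} \<and> goodl d)"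

lemma goodl_disj: "goodl d \<Longrightarrow> \<tau> \<in> set d \<Longrightarrow> \<tau>' \<in> set d \<Longrightarrow> \<tau> \<noteq> \<tau>' \<Longrightarrow> vis \<tau> \<inter> vis \<tau>' = {}"
  by (induction d) auto

lemma goodl_ok: "goodl d \<Longrightarrow> \<tau> \<in> set d \<Longrightarrow> okt \<tau>"
  by (induction d) auto

lemma Ff_sub_vis: assumes "okt \<tau>" "(b, p) \<in> Ff \<tau>" "valid \<tau>" shows "p \<in> vis \<tau>"
proof -
  note kp = kk_props[OF assms(1)]
  have len: "length \<tau> = H" using assms(3) by (simp add: valid_def)
  show ?thesis using assms(2) kp len unfolding Ff_def vis_def by force
qed

definition Adom :: "(bool \<times> nat \<times> nat) set" where "Adom = UNIV \<times> {1..H} \<times> {..<J}"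

lemma finite_Adom: "finite Adom" unfolding Adom_def by simp

lemma Ff_sub_Adom: assumes "okt \<tau>" "valid \<tau>" shows "Ff \<tau> \<subseteq> Adom"
proof
  fix q assume q: "q \<in> Ff \<tau>"
  obtain b p where bp: "q = (b, p)" by (cases q) auto
  have "p \<in> vis \<tau>" using Ff_sub_vis[OF assms(1) _ assms(2)] q bp by simp
  then obtain i where "1 \<le> i" "i < length \<tau>" "p = (lay (st \<tau> i), jdx (st \<tau> i))" unfolding vis_def by auto
  then show "q \<in> Adom" using assms(2) bp unfolding valid_def Adom_def by auto
qed

lemma symd_symd: "symd (symd W F) F = W" unfolding symd_def by auto

lemma symd_Pow: "F \<subseteq> A \<Longrightarrow> W \<subseteq> A \<Longrightarrow> symd W F \<subseteq> A" unfolding symd_def by auto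

lemma sum_symd: assumes "F \<subseteq> A"
  shows "(\<Sum>W\<in>Pow A. g W) = (\<Sum>W\<in>Pow A. g (symd W F))"
  by (rule sum.reindex_bij_witness[where i="\<lambda>W. symd W F" and j="\<lambda>W. symd W F"])
     (use assms in \<open>auto simp: symd_symd symd_Pow\<close>)

lemma pmf_iid: "pmf (iid n p) d = (if length d = n then prod_list (map (pmf p) d) else 0)"
proof (induction n arbitrary: d)
  case 0
  then show ?case by (cases d) auto
next
  case (Suc n)
  have "pmf (iid (Suc n) p) d = pmf p (hd d) * pmf (map_pmf ((#) (hd d)) (iid n p)) d"
    by (subst iid.simps, subst pmf_bind_det[where g=hd]) auto
  also have "\<dots> = pmf p (hd d) * (if hd d # tl d = d then pmf (iid n p) (tl d) else 0)"
    by (subst pmf_map_det[where g=tl]) auto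
  finally show ?case using Suc by (cases d) auto
qed

lemma set_iid: "d \<in> set_pmf (iid n p) \<Longrightarrow> length d = n \<and> set d \<subseteq> set_pmf p"
  by (induction n arbitrary: d) fastforce+

lemma pmf_traj_flip: assumes "valid \<tau>" "okt \<tau>" "\<And>b p. (b, p) \<in> G \<Longrightarrow> p \<notin> vis \<tau>"
  shows "pmf (traj (Mdp \<sigma> W) pib H) \<tau> = pmf (traj (Mdp (\<not> \<sigma>) (symd W (Ff \<tau> \<union> G))) pib H) \<tau>"
  unfolding pmf_traj using flipW[OF assms(1,2), of G \<sigma> W "fst (hd \<tau>)"] assms(3) by auto

lemma sym_sum:
  assumes g: "goodl d" and v: "\<forall>\<tau>\<in>set d. valid \<tau>"
  shows "(\<Sum>W\<in>Pow Adom. pmf (iid n (traj (Mdp True W) pib H)) d) =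
         (\<Sum>W\<in>Pow Adom. pmf (iid n (traj (Mdp False W) pib H)) d)"
proof -
  define FF where "FF = (\<Union>\<tau>\<in>set d. Ff \<tau>)"
  have FFA: "FF \<subseteq> Adom" using Ff_sub_Adom goodl_ok[OF g] v unfolding FF_def by blast
  have each: "pmf (traj (Mdp True W) pib H) \<tau> = pmf (traj (Mdp False (symd W FF)) pib H) \<tau>"
    if t: "\<tau> \<in> set d" for \<tau> W
  proof -
    have FFe: "FF = Ff \<tau> \<union> (FF - Ff \<tau>)" using t unfolding FF_def by auto
    have "\<And>b p. (b, p) \<in> FF - Ff \<tau> \<Longrightarrow> p \<notin> vis \<tau>"
    proof
      fix b p assume bp: "(b, p) \<in> FF - Ff \<tau>" and pv: "p \<in> vis \<tau>"
      then obtain \<tau>' where t': "\<tau>' \<in> set d" "(b, p) \<in> Ff \<tau>'" unfolding FF_def by auto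
      have "\<tau>' \<noteq> \<tau>" using bp t' by auto
      moreover have "p \<in> vis \<tau>'" using Ff_sub_vis[OF goodl_ok[OF g t'(1)] t'(2)] v t'(1) by auto
      ultimately show False using goodl_disj[OF g t t'(1)] pv by auto
    qed
    then show ?thesis
      using pmf_traj_flip[of \<tau> "FF - Ff \<tau>" True W] v t goodl_ok[OF g t] FFe by auto
  qed
  have "(\<Sum>W\<in>Pow Adom. pmf (iid n (traj (Mdp True W) pib H)) d) =
        (\<Sum>W\<in>Pow Adom. pmf (iid n (traj (Mdp False (symd W FF)) pib H)) d)"
    unfolding pmf_iid by (intro sum.cong refl) (auto intro!: arg_cong[where f=prod_list] simp: each)
  also have "\<dots> = (\<Sum>W\<in>Pow Adom. pmf (iid n (traj (Mdp False W) pib H)) d)"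
    using sum_symd[OF FFA, of "\<lambda>W. pmf (iid n (traj (Mdp False W) pib H)) d"] by simp
  finally show ?thesis .
qed

definition acts :: "trajectory \<Rightarrow> bool list" where "acts \<tau> = map (\<lambda>(x, a, r). a) \<tau>"

lemma acts_traj_from: "map_pmf acts (traj_from (Mdp \<sigma> W) pib k x) = iid k coin"
proof (induction k arbitrary: x)
  case 0
  then show ?case by (simp add: acts_def)
next
  case (Suc k)
  have "map_pmf acts (traj_from (Mdp \<sigma> W) pib (Suc k) x) =
     bind_pmf coin (\<lambda>a. bind_pmf (trans (Mdp \<sigma> W) x a) (\<lambda>x'. map_pmf ((#) a) (map_pmf acts (traj_from (Mdp \<sigma> W) pib k x'))))"
    unfolding traj_from_Suc by (simp add: map_bind_pmf map_pmf_comp acts_def)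
  also have "\<dots> = iid (Suc k) coin" by (simp add: Suc)
  finally show ?case .
qed

lemma acts_traj: "map_pmf acts (traj (Mdp \<sigma> W) pib H) = iid H coin"
  unfolding traj_def by (simp add: map_bind_pmf acts_traj_from)

lemma valid_traj: assumes "\<tau> \<in> set_pmf (traj (Mdp \<sigma> W) pib H)" shows "valid \<tau>"
proof -
  obtain x where x: "lay x = 1" "\<tau> \<in> set_pmf (traj_from (Mdp \<sigma> W) pib H x)"
    using assms by (auto simp: traj_def set_U)
  note S = traj_from_support[OF x]
  show ?thesis unfolding valid_def st_def
  proof (intro conjI allI impI)
    show "length \<tau> = H" using S by simp
    fix i assume "i < H"
    then show "lay (fst (\<tau> ! i)) = Suc i" "snd (snd (\<tau> ! i)) \<in> {-1, 0, 1}" using S by auto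
  qed
qed

lemma prob_not_ok: "measure_pmf.prob (traj (Mdp \<sigma> W) pib H) {\<tau>. \<not> okt \<tau>} \<le> 4 / 2 ^ H"
proof -
  define E where "E = {as. \<forall>i. 1 \<le> i \<and> i + 2 \<le> H \<longrightarrow> as ! i}"
  let ?p = "traj (Mdp \<sigma> W) pib H"
  have "measure_pmf.prob ?p {\<tau>. \<not> okt \<tau>} = measure_pmf.prob ?p ({\<tau>. \<not> okt \<tau>} \<inter> set_pmf ?p)"
    by (simp add: measure_Int_set_pmf)
  also have "\<dots> \<le> measure_pmf.prob ?p (acts -` E)"
  proof (rule measure_pmf.finite_measure_mono)
    show "{\<tau>. \<not> okt \<tau>} \<inter> set_pmf ?p \<subseteq> acts -` E"
    proof
      fix \<tau> assume t: "\<tau> \<in> {\<tau>. \<not> okt \<tau>} \<inter> set_pmf ?p"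
      then have "length \<tau> = H" using valid_traj by (auto simp: valid_def)
      then show "\<tau> \<in> acts -` E" using t by (auto simp: E_def okt_def acts_def ac_def split: prod.splits)
    qed
  qed simp
  also have "\<dots> = measure_pmf.prob (iid H coin) E"
    by (metis acts_traj measure_map_pmf)
  also have "\<dots> \<le> 4 / 2 ^ H"
  proof (cases "H \<le> 2")
    case True
    have "measure_pmf.prob (iid H coin) E \<le> 1" by (rule measure_pmf.prob_le_1)
    also have "1 \<le> (4::real) / 2 ^ H" using True
      by (cases H; cases "H - 1") (auto simp: numeral_eq_Suc)
    finally show ?thesis .
  next
    case False
    then obtain m where m: "H = Suc m" "m \<ge> 2" by (cases H) auto
    have "measure_pmf.prob (iid H coin) E =
       measure_pmf.expectation coin (\<lambda>a. measure_pmf.prob (iid m coin) {as. a # as \<in> E})"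
      unfolding m(1) by (rule iid_Suc_prob)
    also have "\<dots> = measure_pmf.expectation coin (\<lambda>a. (1/2) ^ (m - 1))"
    proof (rule Bochner_Integration.integral_cong[OF refl])
      fix a
      have "{as. a # as \<in> E} = {as. \<forall>i<m - 1. as ! i}"
      proof (intro set_eqI iffI)
        fix as assume "as \<in> {as. a # as \<in> E}"
        then have h: "\<And>i. 1 \<le> i \<Longrightarrow> i + 2 \<le> Suc m \<Longrightarrow> (a # as) ! i" unfolding E_def m(1) by blast
        show "as \<in> {as. \<forall>i<m - 1. as ! i}"
        proof (intro CollectI allI impI)
          fix i assume "i < m - 1"
          then show "as ! i" using h[of "Suc i"] by simp
        qed
      next
        fix as assume "as \<in> {as. \<forall>i<m - 1. as ! i}"
        then have a: "\<forall>i<m - 1. as ! i" by simp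
        show "as \<in> {as. a # as \<in> E}" unfolding E_def m(1) mem_Collect_eq
        proof (intro CollectI allI impI)
          fix i assume i: "1 \<le> i \<and> i + 2 \<le> Suc m"
          then obtain i' where "i = Suc i'" by (cases i) auto
          then show "(a # as) ! i" using a i by auto
        qed
      qed
      then show "measure_pmf.prob (iid m coin) {as. a # as \<in> E} = (1/2) ^ (m - 1)"
        using iid_coin_prefix[of "m - 1" m] by simp
    qed
    also have "\<dots> = (1/2) ^ (m - 1)" by simp
    also have "\<dots> = 4 / 2 ^ H" using m
      by (cases m) (auto simp: power_divide field_simps)
    finally show ?thesis by simp
  qed
  finally show ?thesis .
qed

lemma prob_nxt_jdx: "measure_pmf.prob (nxt W h b) {x. jdx x = j} \<le> 1 / J"
proof -
  have "measure_pmf.prob (nxt W h b) {x. jdx x = j} =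
    measure_pmf.expectation unifJ (\<lambda>j'. measure_pmf.prob (map_pmf (\<lambda>s. enc h j' (b \<noteq> lam W h j') s) coin) {x. jdx x = j})"
    unfolding nxt_def by (rule prob_bind_pmf)
  also have "\<dots> = measure_pmf.expectation unifJ (indicator {j})"
  proof (rule integral_cong_AE)
    show "AE j' in measure_pmf unifJ. measure_pmf.prob (map_pmf (\<lambda>s. enc h j' (b \<noteq> lam W h j') s) coin) {x. jdx x = j} = indicator {j} j'"
      unfolding AE_measure_pmf_iff by (auto simp: vimage_def)
  qed auto
  also have "\<dots> = pmf unifJ j" by (simp add: measure_pmf_single)
  also have "\<dots> \<le> 1 / J" by (simp add: pmf_unifJ)
  finally show ?thesis .
qed

lemma prob_traj_from_jdx:
  "1 \<le> i \<Longrightarrow> i < k \<Longrightarrow> measure_pmf.prob (traj_from (Mdp \<sigma> W) pib k x) {\<tau>. jdx (fst (\<tau> ! i)) = j} \<le> 1 / J"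
proof (induction k arbitrary: x i)
  case 0
  then show ?case by simp
next
  case (Suc k)
  show ?case unfolding traj_from_Suc
  proof (rule prob_bind_le)
    fix a
    show "measure_pmf.prob (bind_pmf (trans (Mdp \<sigma> W) x a) (\<lambda>x'. map_pmf ((#) (x, a, rv \<sigma> W x)) (traj_from (Mdp \<sigma> W) pib k x')))
        {\<tau>. jdx (fst (\<tau> ! i)) = j} \<le> 1 / J"
    proof (cases "i = 1")
      case True
      have "measure_pmf.prob (bind_pmf (trans (Mdp \<sigma> W) x a) (\<lambda>x'. map_pmf ((#) (x, a, rv \<sigma> W x)) (traj_from (Mdp \<sigma> W) pib k x')))
        {\<tau>. jdx (fst (\<tau> ! i)) = j} = measure_pmf.expectation (trans (Mdp \<sigma> W) x a)
           (\<lambda>x'. measure_pmf.prob (traj_from (Mdp \<sigma> W) pib k x') {\<tau>. jdx (fst (\<tau> ! 0)) = j})"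
        unfolding prob_bind_pmf using True by (simp add: vimage_def)
      also have "\<dots> \<le> measure_pmf.expectation (trans (Mdp \<sigma> W) x a) (indicator {x'. jdx x' = j})"
      proof (rule integral_mono)
        show "integrable (measure_pmf (trans (Mdp \<sigma> W) x a)) (\<lambda>x'. measure_pmf.prob (traj_from (Mdp \<sigma> W) pib k x') {\<tau>. jdx (fst (\<tau> ! 0)) = j})"
          by (rule measure_pmf.integrable_const_bound[where B=1]) auto
        show "integrable (measure_pmf (trans (Mdp \<sigma> W) x a)) (indicator {x'. jdx x' = j} :: nat \<Rightarrow> real)"
          by (rule measure_pmf.integrable_const_bound[where B=1]) (auto simp: indicator_def)
        fix x'
        show "measure_pmf.prob (traj_from (Mdp \<sigma> W) pib k x') {\<tau>. jdx (fst (\<tau> ! 0)) = j} \<le> indicator {x'. jdx x' = j} x'"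
        proof (cases "jdx x' = j")
          case True
          then show ?thesis by (simp add: measure_pmf.prob_le_1)
        next
          case False
          have "measure_pmf.prob (traj_from (Mdp \<sigma> W) pib k x') {\<tau>. jdx (fst (\<tau> ! 0)) = j} = 0"
            unfolding measure_pmf_zero_iff using traj_from_support[OF refl, of _ \<sigma> W pib k x'] Suc.prems \<open>i = 1\<close> False
            by auto
          then show ?thesis by simp
        qed
      qed
      also have "\<dots> = measure_pmf.prob (trans (Mdp \<sigma> W) x a) {x'. jdx x' = j}" by simp
      also have "\<dots> \<le> 1 / J" by (simp add: Mdp_def prob_nxt_jdx)
      finally show ?thesis .
    next
      case False
      show ?thesis
      proof (rule prob_bind_le)
        fix x'
        have "measure_pmf.prob (traj_from (Mdp \<sigma> W) pib k x') {\<tau>. jdx (fst (\<tau> ! (i - 1))) = j} \<le> 1 / J"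
          using Suc.IH[of "i - 1" x'] Suc.prems False by simp
        moreover have "((#) (x, a, rv \<sigma> W x)) -` {\<tau>. jdx (fst (\<tau> ! i)) = j} = {\<tau>. jdx (fst (\<tau> ! (i - 1))) = j}"
          using Suc.prems by (auto simp: nth_Cons')
        ultimately show "measure_pmf.prob (map_pmf ((#) (x, a, rv \<sigma> W x)) (traj_from (Mdp \<sigma> W) pib k x')) {\<tau>. jdx (fst (\<tau> ! i)) = j} \<le> 1 / J"
          by simp
      qed
    qed
  qed
qed

lemma prob_traj_jdx:
  "1 \<le> i \<Longrightarrow> i < H \<Longrightarrow> measure_pmf.prob (traj (Mdp \<sigma> W) pib H) {\<tau>. jdx (st \<tau> i) = j} \<le> 1 / J"
  unfolding traj_def st_def by (intro prob_bind_le prob_traj_from_jdx)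

lemma card_vis: "card (vis \<tau>) \<le> length \<tau>"
proof -
  have "vis \<tau> = (\<lambda>i. (lay (st \<tau> i), jdx (st \<tau> i))) ` {i. 1 \<le> i \<and> i < length \<tau>}"
    unfolding vis_def by auto
  then have "card (vis \<tau>) \<le> card {i. 1 \<le> i \<and> i < length \<tau>}" by (simp add: card_image_le)
  also have "\<dots> \<le> card {..<length \<tau>}" by (rule card_mono) auto
  finally show ?thesis by simp
qed

lemma finite_vis: "finite (vis \<tau>)"
proof -
  have "vis \<tau> = (\<lambda>i. (lay (st \<tau> i), jdx (st \<tau> i))) ` {i. 1 \<le> i \<and> i < length \<tau>}"
    unfolding vis_def by auto
  then show ?thesis by simp
qed

lemma prob_collide:
  assumes v0: "valid \<tau>0"
  shows "measure_pmf.prob (traj (Mdp \<sigma> W) pib H) {\<tau>. vis \<tau>0 \<inter> vis \<tau> \<noteq> {}} \<le> H / J"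
proof -
  let ?p = "traj (Mdp \<sigma> W) pib H"
  have "measure_pmf.prob ?p {\<tau>. vis \<tau>0 \<inter> vis \<tau> \<noteq> {}} = measure_pmf.prob ?p ({\<tau>. vis \<tau>0 \<inter> vis \<tau> \<noteq> {}} \<inter> set_pmf ?p)"
    by (simp add: measure_Int_set_pmf)
  also have "\<dots> \<le> measure_pmf.prob ?p (\<Union>q\<in>vis \<tau>0. {\<tau>. jdx (st \<tau> (fst q - 1)) = snd q})"
  proof (rule measure_pmf.finite_measure_mono)
    show "{\<tau>. vis \<tau>0 \<inter> vis \<tau> \<noteq> {}} \<inter> set_pmf ?p \<subseteq> (\<Union>q\<in>vis \<tau>0. {\<tau>. jdx (st \<tau> (fst q - 1)) = snd q})"
    proof
      fix \<tau> assume t: "\<tau> \<in> {\<tau>. vis \<tau>0 \<inter> vis \<tau> \<noteq> {}} \<inter> set_pmf ?p"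
      then obtain q where q: "q \<in> vis \<tau>0" "q \<in> vis \<tau>" by auto
      have v: "valid \<tau>" using t valid_traj by auto
      obtain i where i: "1 \<le> i" "i < length \<tau>" "q = (lay (st \<tau> i), jdx (st \<tau> i))" using q(2) unfolding vis_def by auto
      have "lay (st \<tau> i) = Suc i" using v i unfolding valid_def by auto
      then show "\<tau> \<in> (\<Union>q\<in>vis \<tau>0. {\<tau>. jdx (st \<tau> (fst q - 1)) = snd q})" using i by (intro UN_I[OF q(1)]) auto
    qed
  qed simp
  also have "\<dots> \<le> (\<Sum>q\<in>vis \<tau>0. measure_pmf.prob ?p {\<tau>. jdx (st \<tau> (fst q - 1)) = snd q})"
    by (rule measure_pmf.finite_measure_subadditive_finite) (auto simp: finite_vis)
  also have "\<dots> \<le> (\<Sum>q\<in>vis \<tau>0. 1 / J)"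
  proof (rule sum_mono)
    fix q assume "q \<in> vis \<tau>0"
    then obtain i where i: "1 \<le> i" "i < length \<tau>0" "q = (lay (st \<tau>0 i), jdx (st \<tau>0 i))" unfolding vis_def by auto
    have "lay (st \<tau>0 i) = Suc i" "length \<tau>0 = H" using v0 i unfolding valid_def by auto
    then show "measure_pmf.prob ?p {\<tau>. jdx (st \<tau> (fst q - 1)) = snd q} \<le> 1 / J"
      using prob_traj_jdx[of i] i by simp
  qed
  also have "\<dots> = card (vis \<tau>0) / J" by simp
  also have "\<dots> \<le> H / J"
    using card_vis[of \<tau>0] v0 Jpos by (simp add: valid_def divide_right_mono)
  finally show ?thesis .
qed

definition Rv :: "trajectory \<Rightarrow> trajectory \<Rightarrow> bool" where
  "Rv \<tau> \<tau>' \<longleftrightarrow> vis \<tau> \<inter> vis \<tau>' \<noteq> {}"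

lemma good_of: "(\<forall>\<tau>\<in>set d. okt \<tau>) \<Longrightarrow> \<not> collR Rv d \<Longrightarrow> goodl d"
  by (induction d) (auto simp: Rv_def)

lemma prob_bad:
  "measure_pmf.prob (iid n (traj (Mdp \<sigma> W) pib H)) {d. \<not> goodl d} \<le> n * (4 / 2 ^ H) + real n * real n * (H / J)"
proof -
  let ?p = "traj (Mdp \<sigma> W) pib H"
  have "measure_pmf.prob (iid n ?p) {d. \<not> goodl d} \<le>
      measure_pmf.prob (iid n ?p) ({d. \<exists>\<tau>\<in>set d. \<tau> \<in> {\<tau>. \<not> okt \<tau>}} \<union> {d. collR Rv d})"
    by (rule measure_pmf.finite_measure_mono) (use good_of in blast, simp)
  also have "\<dots> \<le> measure_pmf.prob (iid n ?p) {d. \<exists>\<tau>\<in>set d. \<tau> \<in> {\<tau>. \<not> okt \<tau>}} + measure_pmf.prob (iid n ?p) {d. collR Rv d}"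
    by (rule measure_Un_le) auto
  also have "\<dots> \<le> n * (4 / 2 ^ H) + real n * real n * (H / J)"
  proof (rule add_mono)
    show "measure_pmf.prob (iid n ?p) {d. \<exists>\<tau>\<in>set d. \<tau> \<in> {\<tau>. \<not> okt \<tau>}} \<le> n * (4 / 2 ^ H)"
      using iid_union[of n ?p "{\<tau>. \<not> okt \<tau>}"] prob_not_ok[of \<sigma> W]
      by (meson mult_left_mono of_nat_0_le_iff order_trans)
    show "measure_pmf.prob (iid n ?p) {d. collR Rv d} \<le> real n * real n * (H / J)"
      by (rule iid_coll) (auto simp: Rv_def intro: prob_collide valid_traj)
  qed
  finally show ?thesis .
qed

definition TT :: "trajectory set" where "TT = {\<tau>. valid \<tau>}"

lemma finite_TT: "finite TT"
proof -
  define Z where "Z = (\<Union>h\<in>{..H}. Xs h) \<times> (UNIV :: bool set) \<times> ({-1, 0, 1} :: real set)"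
  have fZ: "finite Z" unfolding Z_def using finite_Xs by auto
  have "TT \<subseteq> {\<tau>. set \<tau> \<subseteq> Z \<and> length \<tau> = H}"
  proof
    fix \<tau> assume "\<tau> \<in> TT"
    then have v: "valid \<tau>" by (simp add: TT_def)
    have "set \<tau> \<subseteq> Z"
    proof
      fix e assume "e \<in> set \<tau>"
      then obtain i where i: "i < length \<tau>" "e = \<tau> ! i" by (auto simp: in_set_conv_nth)
      obtain a b c where e: "e = (a, b, c)" by (cases e) auto
      have "lay (fst (\<tau> ! i)) = Suc i \<and> snd (snd (\<tau> ! i)) \<in> {-1, 0, 1}" "i < H"
        using v i unfolding valid_def st_def by auto
      moreover have ti: "\<tau> ! i = (a, b, c)" using i(2) e by simp
      ultimately have "lay a = Suc i" "c \<in> {-1, 0, 1}" "i < H" by auto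
      then show "e \<in> Z" unfolding Z_def Xs_def e by auto
    qed
    then show "\<tau> \<in> {\<tau>. set \<tau> \<subseteq> Z \<and> length \<tau> = H}" using v by (simp add: valid_def)
  qed
  then show ?thesis using finite_lists_length_eq[OF fZ] finite_subset by blast
qed

definition SS :: "nat \<Rightarrow> trajectory list set" where "SS n = {d. set d \<subseteq> TT \<and> length d = n}"

lemma finite_SS: "finite (SS n)"
  unfolding SS_def using finite_lists_length_eq[OF finite_TT] .

lemma set_D: "set_pmf (iid n (traj (Mdp \<sigma> W) pib H)) \<subseteq> SS n"
  using set_iid valid_traj unfolding SS_def TT_def by blast

lemma main_locale:
  fixes n :: nat and alg :: "trajectory list \<Rightarrow> real pmf"
  assumes small: "n * (4 / 2 ^ H) + real n * real n * (H / J) \<le> 1/2"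
  shows "\<exists>\<sigma> W. W \<subseteq> Adom \<and> measure_pmf.prob (bind_pmf (iid n (traj (Mdp \<sigma> W) pib H)) alg)
            {v. \<bar>v - policy_value (Mdp \<sigma> W) (det_policy (\<lambda>x. True)) H\<bar> > 1/2} \<ge> 1/4"
proof (rule ccontr)
  assume "\<not> ?thesis"
  then have lt: "\<And>\<sigma> W. W \<subseteq> Adom \<Longrightarrow> measure_pmf.prob (bind_pmf (iid n (traj (Mdp \<sigma> W) pib H)) alg)
            {v. \<bar>v - (if \<sigma> then 1 else -1)\<bar> > 1/2} < 1/4"
    using policy_value_Mdp[OF Hpos] by (auto simp: not_le)
  define D where "D = (\<lambda>\<sigma> W. iid n (traj (Mdp \<sigma> W) pib H))"
  define f where "f = (\<lambda>\<sigma> d. measure_pmf.prob (alg d) {v. \<bar>v - (if \<sigma> then 1 else -1)\<bar> > (1/2::real)})"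
  define Sg where "Sg = SS n \<inter> {d. goodl d}"
  have fin: "finite (Pow Adom)" by (simp add: finite_Adom)
  have f01: "\<And>\<sigma> d. 0 \<le> f \<sigma> d" by (simp add: f_def)
  have fsum: "\<And>d. f True d + f False d \<ge> 1"
  proof -
    fix d
    have "1 = measure_pmf.prob (alg d) ({v. \<bar>v - 1\<bar> > (1/2::real)} \<union> {v. \<bar>v - (-1)\<bar> > 1/2})"
      by (subst measure_pmf.prob_space[symmetric]) (rule arg_cong[where f="measure _"], auto simp: abs_if)
    also have "\<dots> \<le> f True d + f False d" unfolding f_def if_True if_False by (rule measure_Un_le) auto
    finally show "f True d + f False d \<ge> 1" .
  qed
  have P_eq: "measure_pmf.prob (bind_pmf (D \<sigma> W) alg) {v. \<bar>v - (if \<sigma> then 1 else -1)\<bar> > 1/2} =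
       (\<Sum>d\<in>SS n. f \<sigma> d * pmf (D \<sigma> W) d)" for \<sigma> W
  proof -
    have "measure_pmf.prob (bind_pmf (D \<sigma> W) alg) {v. \<bar>v - (if \<sigma> then 1 else -1)\<bar> > 1/2} =
       measure_pmf.expectation (D \<sigma> W) (f \<sigma>)" unfolding prob_bind_pmf f_def by simp
    also have "\<dots> = (\<Sum>d\<in>SS n. f \<sigma> d * pmf (D \<sigma> W) d)"
      by (rule integral_measure_pmf_real) (use set_D[of n \<sigma> W] finite_SS in \<open>auto simp: D_def\<close>)
    finally show ?thesis .
  qed
  have good_eq: "measure_pmf.prob (D \<sigma> W) {d. goodl d} = (\<Sum>d\<in>Sg. pmf (D \<sigma> W) d)" for \<sigma> W
  proof -
    have "measure_pmf.prob (D \<sigma> W) {d. goodl d} = measure_pmf.prob (D \<sigma> W) ({d. goodl d} \<inter> set_pmf (D \<sigma> W))"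
      by (simp add: measure_Int_set_pmf)
    also have "\<dots> = measure_pmf.prob (D \<sigma> W) Sg"
    proof -
      have "{d. goodl d} \<inter> set_pmf (D \<sigma> W) = Sg \<inter> set_pmf (D \<sigma> W)"
        using set_D[of n \<sigma> W] unfolding Sg_def D_def by auto
      then show ?thesis by (simp add: measure_Int_set_pmf)
    qed
    also have "\<dots> = (\<Sum>d\<in>Sg. pmf (D \<sigma> W) d)"
      by (rule measure_measure_pmf_finite) (simp add: Sg_def finite_SS)
    finally show ?thesis .
  qed
  have "(\<Sum>W\<in>Pow Adom. (\<Sum>d\<in>SS n. f True d * pmf (D True W) d) + (\<Sum>d\<in>SS n. f False d * pmf (D False W) d))
      < (\<Sum>W\<in>Pow Adom. 1/2)"
  proof (rule sum_strict_mono)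
    show "Pow Adom \<noteq> {}" by auto
    fix W assume "W \<in> Pow Adom"
    then show "(\<Sum>d\<in>SS n. f True d * pmf (D True W) d) + (\<Sum>d\<in>SS n. f False d * pmf (D False W) d) < 1/2"
      using lt[of W True] lt[of W False] P_eq[of True W] P_eq[of False W] by (simp add: D_def)
  qed (rule fin)
  also have "\<dots> = card (Pow Adom) / 2" by simp
  also have "\<dots> \<le> (\<Sum>W\<in>Pow Adom. measure_pmf.prob (D True W) {d. goodl d})"
  proof -
    have "\<And>W. 1/2 \<le> measure_pmf.prob (D True W) {d. goodl d}"
    proof -
      fix W
      have "measure_pmf.prob (D True W) {d. \<not> goodl d} \<le> 1/2"
        using prob_bad[of n True W] small unfolding D_def by linarith
      moreover have "measure_pmf.prob (D True W) {d. goodl d} = 1 - measure_pmf.prob (D True W) {d. \<not> goodl d}"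
        using measure_pmf.prob_compl[of "{d. \<not> goodl d}" "D True W"] by (simp add: Compl_eq_Diff_UNIV[symmetric] Collect_neg_eq)
      ultimately show "1/2 \<le> measure_pmf.prob (D True W) {d. goodl d}" by simp
    qed
    then have "(\<Sum>W\<in>Pow Adom. (1/2::real)) \<le> (\<Sum>W\<in>Pow Adom. measure_pmf.prob (D True W) {d. goodl d})"
      by (rule sum_mono)
    then show ?thesis by simp
  qed
  also have "\<dots> = (\<Sum>W\<in>Pow Adom. \<Sum>d\<in>Sg. pmf (D True W) d)" by (simp add: good_eq)
  also have "\<dots> = (\<Sum>d\<in>Sg. \<Sum>W\<in>Pow Adom. pmf (D True W) d)" by (rule sum.swap)
  also have "\<dots> \<le> (\<Sum>d\<in>Sg. (f True d + f False d) * (\<Sum>W\<in>Pow Adom. pmf (D True W) d))"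
  proof (rule sum_mono)
    fix d
    have "0 \<le> (\<Sum>W\<in>Pow Adom. pmf (D True W) d)" by (simp add: sum_nonneg)
    then have "1 * (\<Sum>W\<in>Pow Adom. pmf (D True W) d) \<le> (f True d + f False d) * (\<Sum>W\<in>Pow Adom. pmf (D True W) d)"
      by (rule mult_right_mono[OF fsum])
    then show "(\<Sum>W\<in>Pow Adom. pmf (D True W) d) \<le> (f True d + f False d) * (\<Sum>W\<in>Pow Adom. pmf (D True W) d)" by simp
  qed
  also have "\<dots> = (\<Sum>d\<in>Sg. f True d * (\<Sum>W\<in>Pow Adom. pmf (D True W) d) + f False d * (\<Sum>W\<in>Pow Adom. pmf (D False W) d))"
  proof (rule sum.cong[OF refl])
    fix d assume "d \<in> Sg"
    then have "goodl d" "\<forall>\<tau>\<in>set d. valid \<tau>" unfolding Sg_def SS_def TT_def by auto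
    from sym_sum[OF this, of n] show "(f True d + f False d) * (\<Sum>W\<in>Pow Adom. pmf (D True W) d) =
      f True d * (\<Sum>W\<in>Pow Adom. pmf (D True W) d) + f False d * (\<Sum>W\<in>Pow Adom. pmf (D False W) d)"
      unfolding D_def by (simp add: algebra_simps)
  qed
  also have "\<dots> = (\<Sum>W\<in>Pow Adom. (\<Sum>d\<in>Sg. f True d * pmf (D True W) d) + (\<Sum>d\<in>Sg. f False d * pmf (D False W) d))"
    by (simp add: sum_distrib_left sum.distrib sum.swap[of _ Sg])
  also have "\<dots> \<le> (\<Sum>W\<in>Pow Adom. (\<Sum>d\<in>SS n. f True d * pmf (D True W) d) + (\<Sum>d\<in>SS n. f False d * pmf (D False W) d))"
    by (intro sum_mono add_mono sum_mono2) (auto simp: Sg_def finite_SS f01)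
  finally show False by simp
qed

end


lemma arith_small:
  fixes H n :: nat
  assumes "real n \<le> 1/16 * 2 ^ H"
  shows "n * (4 / 2 ^ H) + real n * real n * (H / 8 ^ H) \<le> (1/2 :: real)"
proof -
  define t :: real where "t = 2 ^ H"
  have t: "t > 0" by (simp add: t_def)
  have a: "real n \<le> t / 16" using assms by (simp add: t_def)
  have Ht: "real H \<le> t" unfolding t_def using less_exp[of H] by (metis of_nat_less_numeral_power_cancel_iff less_imp_le numeral_eq_Suc pow.simps(1))
  have 8: "(8::real) ^ H = t * t * t"
  proof -
    have e1: "(2::real) ^ (3 * H) = (2 ^ 3) ^ H" by (rule power_mult)
    have e2: "(2::real) ^ (H * 3) = (2 ^ H) ^ 3" by (rule power_mult)
    have "(8::real) ^ H = (2 ^ H) ^ 3" using e1 e2 by (simp add: mult.commute)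
    then show ?thesis unfolding t_def by (simp add: power3_eq_cube)
  qed
  have 1: "real n * (4 / t) \<le> 1/4"
  proof -
    have "real n * (4 / t) \<le> (t / 16) * (4 / t)" using a t by (intro mult_right_mono) auto
    also have "\<dots> = 1/4" using t by simp
    finally show ?thesis .
  qed
  have 2: "real n * real n * (real H / (t * t * t)) \<le> 1/256"
  proof -
    have "real n * real n \<le> (t/16) * (t/16)" using a by (intro mult_mono) auto
    moreover have "real H / (t * t * t) \<le> t / (t * t * t)" using Ht t by (intro divide_right_mono) auto
    ultimately have "real n * real n * (real H / (t * t * t)) \<le> (t/16) * (t/16) * (t / (t * t * t))"
      using t a by (intro mult_mono) auto
    also have "\<dots> = 1/256" using t by (simp add: field_simps)
    finally show ?thesis .
  qed
  show ?thesis using 1 2 unfolding t_def[symmetric] 8 by linarith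
qed

theorem mainTheorem15:
  shows "\<exists>c::real. c > 0 \<and>
    (\<forall>H::nat. H \<ge> 1 \<longrightarrow>
      (\<exists>(X :: nat \<Rightarrow> nat set) (\<M> :: mdp set) (\<pi>e :: nat \<Rightarrow> bool) (\<pi>b :: policy).
         (\<forall>M\<in>\<M>. layered_mdp X H M) \<and>
         (\<forall>M\<in>\<M>. pf_conc_le X H M (occupancy M \<pi>b) 4) \<and>
         (\<forall>(alg :: trajectory list \<Rightarrow> real pmf) (n::nat). real n \<le> c * 2 ^ H \<longrightarrow>
            (\<exists>M\<in>\<M>. measure_pmf.prob (bind_pmf (dataset M \<pi>b H n) alg)
                       {v. \<bar>v - policy_value M (det_policy \<pi>e) H\<bar> > 1/2} \<ge> 1/4))))"
proof (intro exI[of _ "1/16"] conjI allI impI)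
  show "(0::real) < 1/16" by simp
  fix H :: nat assume H: "1 \<le> H"
  interpret C: cons H "8 ^ H" using H by unfold_locales simp_all
  let ?M = "{C.Mdp \<sigma> W | \<sigma> W. W \<subseteq> C.Adom}"
  show "\<exists>(X :: nat \<Rightarrow> nat set) (\<M> :: mdp set) (\<pi>e :: nat \<Rightarrow> bool) (\<pi>b :: policy).
         (\<forall>M\<in>\<M>. layered_mdp X H M) \<and>
         (\<forall>M\<in>\<M>. pf_conc_le X H M (occupancy M \<pi>b) 4) \<and>
         (\<forall>(alg :: trajectory list \<Rightarrow> real pmf) (n::nat). real n \<le> 1/16 * 2 ^ H \<longrightarrow>
            (\<exists>M\<in>\<M>. measure_pmf.prob (bind_pmf (dataset M \<pi>b H n) alg)
                       {v. \<bar>v - policy_value M (det_policy \<pi>e) H\<bar> > 1/2} \<ge> 1/4))"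
  proof (intro exI conjI ballI allI impI)
    fix M assume "M \<in> ?M"
    then obtain \<sigma> W where M: "M = C.Mdp \<sigma> W" by auto
    show "layered_mdp C.Xs H M" unfolding M by (rule C.layered)
    show "pf_conc_le C.Xs H M (occupancy M C.pib) 4" unfolding M by (rule C.pf)
  next
    fix alg :: "trajectory list \<Rightarrow> real pmf" and n :: nat
    assume "real n \<le> 1/16 * 2 ^ H"
    then have small: "n * (4 / 2 ^ H) + real n * real n * (H / real (8 ^ H)) \<le> (1/2 :: real)"
      using arith_small by simp
    obtain \<sigma> W where W: "W \<subseteq> C.Adom" and P: "measure_pmf.prob (bind_pmf (iid n (traj (C.Mdp \<sigma> W) C.pib H)) alg)
            {v. \<bar>v - policy_value (C.Mdp \<sigma> W) (det_policy (\<lambda>x. True)) H\<bar> > 1/2} \<ge> 1/4"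
      using C.main_locale[OF small, of alg] by blast
    show "\<exists>M\<in>?M. measure_pmf.prob (bind_pmf (dataset M C.pib H n) alg)
                       {v. \<bar>v - policy_value M (det_policy (\<lambda>x. True)) H\<bar> > 1/2} \<ge> 1/4"
      using W P by (auto simp: dataset_def)
  qed
qed

end
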